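(* Let $0<\alpha<1$ and $U$ be uniform on $[0,1]$. Then: (i) for $\theta>0$, with $W^{1/\alpha}_{\alpha,\theta}:=\big(\frac{U^{\alpha/\theta}}{1-U^{\alpha/\theta}}\big)^{1/\alpha}$ (which has cdf $y^\theta(1+y^\alpha)^{-\theta/\alpha}$ and density $\theta y^{\theta-1}(1+y^\alpha)^{-(\theta+\alpha)/\alpha}$, $y>0$), \[W^{1/\alpha}_{\alpha,\theta}\stackrel{d}{=}\Big(\frac{\gamma_{\theta/\alpha}}{\gamma_1}\Big)^{1/\alpha}\stackrel{d}{=}\frac{\chi_{\alpha,\theta}}{\gamma_1}\stackrel{d}{=}\frac{\gamma_\theta}{\gamma_1}X_{\alpha,\theta};\] (ii) for $0<\sigma\le1$, the random variable $\Sigma_{\alpha,\sigma}:=\gamma_1/X^{(\sigma)}_{\alpha,1}$ has Laplace transform $\mathbb{E}[e^{-\lambda\Sigma_{\alpha,\sigma}}]=1-\lambda^\sigma(1+\lambda^\alpha)^{-\sigma/\alpha}$, $\lambda\ge0$.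
   Context: $S_\alpha$ is positive stable with $\mathbb{E}[e^{-\lambda S_\alpha}]=e^{-\lambda^\alpha}$ and density $f_\alpha$; $S_{\alpha,\theta}$ ($\theta>-\alpha$) has density proportional to $t^{-\theta}f_\alpha(t)$; $X_{\alpha,\theta}:=S_\alpha/S_{\alpha,\theta}$ (independent). $\gamma_a$ is Gamma$(a,1)$, $\beta_{a,b}$ Beta$(a,b)$ ($\beta_{a,0}:=1$); all variables in ratios/products are independent. $\chi_{\alpha,\theta}:=\gamma_{\theta/\alpha}^{1/\alpha}S_\alpha$. $X^{(\sigma)}_{\alpha,1}:=\beta_{\sigma,1-\sigma}X_{\alpha,\sigma}$. *)

theory Defs
  imports "HOL-Probability.Probability"
begin

definition pos_stable_density :: "real \<Rightarrow> (real \<Rightarrow> real) \<Rightarrow> bool" where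
  "pos_stable_density \<alpha> f \<longleftrightarrow> f \<in> borel_measurable borel \<and> (\<forall>t. 0 \<le> f t) \<and> (\<forall>t\<le>0. f t = 0) \<and>
     (\<forall>l\<ge>0. has_bochner_integral lborel (\<lambda>t. exp (-(l*t)) * f t) (exp (-(l powr \<alpha>))))"

definition stable_law :: "(real \<Rightarrow> real) \<Rightarrow> real measure" where
  "stable_law f = density lborel (\<lambda>t. ennreal (f t))"

definition tilted_stable_law :: "(real \<Rightarrow> real) \<Rightarrow> real \<Rightarrow> real measure" where
  "tilted_stable_law f \<theta> = density lborel (\<lambda>t. ennreal (if 0 < t then
      t powr (-\<theta>) * f t / (LINT s|lborel. (if 0 < s then s powr (-\<theta>) * f s else 0)) else 0))"

definition gamma_law :: "real \<Rightarrow> real measure" where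
  "gamma_law a = density lborel (\<lambda>x. ennreal (if 0 < x then x powr (a - 1) * exp (-x) / Gamma a else 0))"

text \<open>Beta(a,b); by convention Beta(a,0) is the point mass at 1.\<close>
definition beta_law :: "real \<Rightarrow> real \<Rightarrow> real measure" where
  "beta_law a b = (if b = 0 then return borel 1 else
     density lborel (\<lambda>x. ennreal (if 0 < x \<and> x < 1 then x powr (a - 1) * (1 - x) powr (b - 1) / Beta a b else 0)))"

definition ratio_law :: "real measure \<Rightarrow> real measure \<Rightarrow> real measure" where
  "ratio_law M N = distr (M \<Otimes>\<^sub>M N) borel (\<lambda>z. fst z / snd z)"

definition prod_law :: "real measure \<Rightarrow> real measure \<Rightarrow> real measure" where
  "prod_law M N = distr (M \<Otimes>\<^sub>M N) borel (\<lambda>z. fst z * snd z)"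

definition pow_law :: "real measure \<Rightarrow> real \<Rightarrow> real measure" where
  "pow_law M p = distr M borel (\<lambda>x. x powr p)"

definition X_law :: "(real \<Rightarrow> real) \<Rightarrow> real \<Rightarrow> real measure" where
  "X_law f \<theta> = ratio_law (stable_law f) (tilted_stable_law f \<theta>)"

definition chi_law :: "real \<Rightarrow> (real \<Rightarrow> real) \<Rightarrow> real \<Rightarrow> real measure" where
  "chi_law \<alpha> f \<theta> = prod_law (pow_law (gamma_law (\<theta> / \<alpha>)) (1 / \<alpha>)) (stable_law f)"

definition X_sigma_law :: "(real \<Rightarrow> real) \<Rightarrow> real \<Rightarrow> real measure" where
  "X_sigma_law f \<sigma> = prod_law (beta_law \<sigma> (1 - \<sigma>)) (X_law f \<sigma>)"

definition W_law :: "real \<Rightarrow> real \<Rightarrow> real measure" where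
  "W_law \<alpha> \<theta> = distr (uniform_measure lborel {0..1}) borel
      (\<lambda>u. (u powr (\<alpha> / \<theta>) / (1 - u powr (\<alpha> / \<theta>))) powr (1 / \<alpha>))"

end

theory Submission
  imports Defs
begin


lemma measure_eq_atMost:
  fixes M N :: "real measure"
  assumes sM: "sets M = sets borel" and sN: "sets N = sets borel"
    and eq: "\<And>y. emeasure M {..y} = emeasure N {..y}" and fin: "\<And>y. emeasure M {..y} \<noteq> \<infinity>"
  shows "M = N"
proof (rule measure_eqI_generator_eq[where \<Omega>=UNIV and E="range atMost" and A="\<lambda>i. {..real i}"])
  show "Int_stable (range atMost :: real set set)"
    by (auto simp: Int_stable_def intro!: image_eqI[where x="min _ _"])
  have b: "sets (borel::real measure) = sigma_sets UNIV (range atMost)"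
    by (subst borel_eq_atMost) simp
  show "sets M = sigma_sets UNIV (range atMost)" using sM b by simp
  show "sets N = sigma_sets UNIV (range atMost)" using sN b by simp
  show "(\<Union>i. {..real i}) = UNIV" by (auto intro: real_arch_simple)
  show "\<And>i. emeasure M {..real i} \<noteq> \<infinity>" by (rule fin)
qed (auto simp: eq)

lemma meas_pair_borel:
  assumes "sets M = sets borel" "sets N = sets borel"
  shows "measurable (M \<Otimes>\<^sub>M N) K = measurable (borel \<Otimes>\<^sub>M borel) K"
  by (rule measurable_cong_sets[OF sets_pair_measure_cong[OF assms] refl])

lemma nn_ratio1:
  fixes M N :: "real measure"
  assumes N: "sigma_finite_measure N" and sM: "sets M = sets borel" and sN: "sets N = sets borel"
    and h[measurable]: "h \<in> borel_measurable borel"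
  shows "(\<integral>\<^sup>+z. h z \<partial>ratio_law M N) = (\<integral>\<^sup>+x. \<integral>\<^sup>+y. h (x / y) \<partial>N \<partial>M)"
proof -
  have m: "(\<lambda>z. fst z / snd z) \<in> measurable (M \<Otimes>\<^sub>M N) borel"
    unfolding meas_pair_borel[OF sM sN] by measurable
  have m2: "(\<lambda>z. h (fst z / snd z)) \<in> borel_measurable (M \<Otimes>\<^sub>M N)"
    unfolding meas_pair_borel[OF sM sN] by measurable
  show ?thesis unfolding ratio_law_def
    by (subst nn_integral_distr[OF m]) (auto simp: sigma_finite_measure.nn_integral_fst[OF N m2, symmetric])
qed

lemma nn_ratio2:
  fixes M N :: "real measure"
  assumes M: "sigma_finite_measure M" and N: "sigma_finite_measure N" and sM: "sets M = sets borel" and sN: "sets N = sets borel"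
    and h[measurable]: "h \<in> borel_measurable borel"
  shows "(\<integral>\<^sup>+z. h z \<partial>ratio_law M N) = (\<integral>\<^sup>+y. \<integral>\<^sup>+x. h (x / y) \<partial>M \<partial>N)"
proof -
  interpret pair_sigma_finite M N using M N by (simp add: pair_sigma_finite_def)
  have m: "(\<lambda>z. fst z / snd z) \<in> measurable (M \<Otimes>\<^sub>M N) borel"
    unfolding meas_pair_borel[OF sM sN] by measurable
  have m2: "(\<lambda>z. h (fst z / snd z)) \<in> borel_measurable (M \<Otimes>\<^sub>M N)"
    unfolding meas_pair_borel[OF sM sN] by measurable
  show ?thesis unfolding ratio_law_def
    by (subst nn_integral_distr[OF m]) (auto simp: nn_integral_snd[OF m2, symmetric])
qed

lemma nn_prod1:
  fixes M N :: "real measure"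
  assumes N: "sigma_finite_measure N" and sM: "sets M = sets borel" and sN: "sets N = sets borel"
    and h[measurable]: "h \<in> borel_measurable borel"
  shows "(\<integral>\<^sup>+z. h z \<partial>prod_law M N) = (\<integral>\<^sup>+x. \<integral>\<^sup>+y. h (x * y) \<partial>N \<partial>M)"
proof -
  have m: "(\<lambda>z. fst z * snd z) \<in> measurable (M \<Otimes>\<^sub>M N) borel"
    unfolding meas_pair_borel[OF sM sN] by measurable
  have m2: "(\<lambda>z. h (fst z * snd z)) \<in> borel_measurable (M \<Otimes>\<^sub>M N)"
    unfolding meas_pair_borel[OF sM sN] by measurable
  show ?thesis unfolding prod_law_def
    by (subst nn_integral_distr[OF m]) (auto simp: sigma_finite_measure.nn_integral_fst[OF N m2, symmetric])
qed

lemma nn_prod2: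
  fixes M N :: "real measure"
  assumes M: "sigma_finite_measure M" and N: "sigma_finite_measure N" and sM: "sets M = sets borel" and sN: "sets N = sets borel"
    and h[measurable]: "h \<in> borel_measurable borel"
  shows "(\<integral>\<^sup>+z. h z \<partial>prod_law M N) = (\<integral>\<^sup>+y. \<integral>\<^sup>+x. h (x * y) \<partial>M \<partial>N)"
proof -
  interpret pair_sigma_finite M N using M N by (simp add: pair_sigma_finite_def)
  have m: "(\<lambda>z. fst z * snd z) \<in> measurable (M \<Otimes>\<^sub>M N) borel"
    unfolding meas_pair_borel[OF sM sN] by measurable
  have m2: "(\<lambda>z. h (fst z * snd z)) \<in> borel_measurable (M \<Otimes>\<^sub>M N)"
    unfolding meas_pair_borel[OF sM sN] by measurable
  show ?thesis unfolding prod_law_def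
    by (subst nn_integral_distr[OF m]) (auto simp: nn_integral_snd[OF m2, symmetric])
qed


lemma sets_laws[simp]:
  "sets (ratio_law M N) = sets borel" "sets (prod_law M N) = sets borel" "sets (pow_law M p) = sets borel"
  by (simp_all add: ratio_law_def prod_law_def pow_law_def)

lemma prob_ratio:
  assumes pM: "prob_space M" and pN: "prob_space N" and sM: "sets M = sets borel" and sN: "sets N = sets borel"
  shows "prob_space (ratio_law M N)"
proof -
  have m: "(\<lambda>z. fst z / snd z) \<in> measurable (M \<Otimes>\<^sub>M N) borel"
    unfolding meas_pair_borel[OF sM sN] by measurable
  show ?thesis unfolding ratio_law_def by (rule prob_space.prob_space_distr[OF prob_space_pair[OF pM pN] m])
qed

lemma prob_prod:
  assumes pM: "prob_space M" and pN: "prob_space N" and sM: "sets M = sets borel" and sN: "sets N = sets borel"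
  shows "prob_space (prod_law M N)"
proof -
  have m: "(\<lambda>z. fst z * snd z) \<in> measurable (M \<Otimes>\<^sub>M N) borel"
    unfolding meas_pair_borel[OF sM sN] by measurable
  show ?thesis unfolding prod_law_def by (rule prob_space.prob_space_distr[OF prob_space_pair[OF pM pN] m])
qed

lemma nn_density_lborel:
  assumes [measurable]: "g \<in> borel_measurable borel" "h \<in> borel_measurable borel"
  shows "(\<integral>\<^sup>+x. h x \<partial>density lborel g) = (\<integral>\<^sup>+x. g x * h x \<partial>lborel)"
  by (subst nn_integral_density) auto
lemma nn_scale:
  fixes c :: real assumes c: "c > 0" and [measurable]: "h \<in> borel_measurable borel"
  shows "(\<integral>\<^sup>+x. h x \<partial>lborel) = ennreal c * (\<integral>\<^sup>+x. h (c * x) \<partial>lborel)"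
proof -
  have "(\<integral>\<^sup>+x. h x \<partial>lborel) = (\<integral>\<^sup>+x. h x \<partial>density (distr lborel borel ((*) c)) (\<lambda>_. \<bar>c\<bar>))"
    using lborel_distr_mult'[of c] c by simp
  also have "\<dots> = (\<integral>\<^sup>+x. ennreal c * h (c * x) \<partial>lborel)"
    using c by (subst nn_integral_density) (auto simp: nn_integral_distr)
  also have "\<dots> = ennreal c * (\<integral>\<^sup>+x. h (c * x) \<partial>lborel)"
    by (rule nn_integral_cmult) auto
  finally show ?thesis .
qed

lemma nn_shift:
  fixes c :: real assumes [measurable]: "h \<in> borel_measurable borel"
  shows "(\<integral>\<^sup>+x. h x \<partial>lborel) = (\<integral>\<^sup>+x. h (c + x) \<partial>lborel)"
proof -
  have "(\<integral>\<^sup>+x. h x \<partial>lborel) = (\<integral>\<^sup>+x. h x \<partial>distr lborel borel ((+) c))"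
    by (simp add: lborel_distr_plus)
  also have "\<dots> = (\<integral>\<^sup>+x. h (c + x) \<partial>lborel)"
    by (subst nn_integral_distr) auto
  finally show ?thesis .
qed




lemma Gamma_nn:
  fixes a b :: real assumes a: "a > 0" and b: "b > 0"
  shows "(\<integral>\<^sup>+x. ennreal (if 0 < x then x powr (a - 1) * exp (-(b * x)) else 0) \<partial>lborel) = ennreal (Gamma a / b powr a)"
proof -
  have "(\<integral>\<^sup>+x. ennreal (if 0 < x then x powr (a - 1) * exp (-(b * x)) else 0) \<partial>lborel)
     = ennreal (1/b) * (\<integral>\<^sup>+x. ennreal (if 0 < (1/b) * x then ((1/b) * x) powr (a - 1) * exp (-(b * ((1/b) * x))) else 0) \<partial>lborel)"
    using b by (intro nn_scale) auto
  also have "(\<integral>\<^sup>+x. ennreal (if 0 < (1/b) * x then ((1/b) * x) powr (a - 1) * exp (-(b * ((1/b) * x))) else 0) \<partial>lborel)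
     = (\<integral>\<^sup>+x. ennreal (b powr (1 - a)) * ennreal (indicator {0..} x * x powr (a - 1) / exp x) \<partial>lborel)"
  proof (intro nn_integral_cong)
    fix x :: real
    show "ennreal (if 0 < (1/b) * x then ((1/b) * x) powr (a - 1) * exp (-(b * ((1/b) * x))) else 0)
       = ennreal (b powr (1 - a)) * ennreal (indicator {0..} x * x powr (a - 1) / exp x)"
    proof (cases "x > 0")
      case True
      have "((1/b) * x) powr (a - 1) = b powr (1 - a) * x powr (a - 1)"
        using b True by (simp add: powr_mult powr_divide powr_minus_divide[symmetric] powr_diff divide_simps)
      moreover have "exp (-(b * ((1/b) * x))) = 1 / exp x" using b by (simp add: exp_minus field_simps)
      ultimately show ?thesis using True b
        by (simp add: ennreal_mult'[symmetric] indicator_def)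
    next
      case False
      then show ?thesis using b by (auto simp: indicator_def zero_less_mult_iff zero_less_divide_iff)
    qed
  qed
  also have "\<dots> = ennreal (b powr (1 - a)) * ennreal (Gamma a)"
    using a by (subst nn_integral_cmult) (auto simp: Gamma_conv_nn_integral_real)
  also have "ennreal (1/b) * (ennreal (b powr (1 - a)) * ennreal (Gamma a)) = ennreal (Gamma a / b powr a)"
    using a b Gamma_real_pos[OF a]
    by (simp add: ennreal_mult'[symmetric] powr_diff field_simps)
  finally show ?thesis .
qed

lemma exp_tail:
  fixes c :: real assumes c: "c \<ge> 0"
  shows "(\<integral>\<^sup>+e. ennreal (if 0 < e then exp (-e) else 0) * indicator {c..} e \<partial>lborel) = ennreal (exp (-c))"
proof -
  have "(\<integral>\<^sup>+e. ennreal (if 0 < e then exp (-e) else 0) * indicator {c..} e \<partial>lborel)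
      = (\<integral>\<^sup>+e. ennreal (exp (-e)) * indicator {c..} e \<partial>lborel)"
    using c by (intro nn_integral_cong_AE eventually_mono[OF AE_lborel_singleton[of 0]])
       (auto simp: indicator_def)
  also have "\<dots> = 0 - (- exp (-c))"
  proof (rule nn_integral_FTC_atLeast[where F="\<lambda>x. - exp (-x)"])
    have "((\<lambda>x::real. exp (-x)) \<longlongrightarrow> 0) at_top"
      by (rule filterlim_compose[OF exp_at_bot filterlim_uminus_at_bot_at_top])
    from tendsto_minus[OF this] show "((\<lambda>x::real. - exp (-x)) \<longlongrightarrow> 0) at_top" by simp
  qed (auto intro!: derivative_eq_intros)
  finally show ?thesis by simp
qed

lemma exp_head:
  fixes c :: real assumes c: "c \<ge> 0"
  shows "(\<integral>\<^sup>+e. ennreal (if 0 < e then exp (-e) else 0) * indicator {..c} e \<partial>lborel) = ennreal (1 - exp (-c))"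
proof -
  have "(\<integral>\<^sup>+e. ennreal (if 0 < e then exp (-e) else 0) * indicator {..c} e \<partial>lborel)
      = (\<integral>\<^sup>+e. ennreal (exp (-e)) * indicator {0..c} e \<partial>lborel)"
    using c by (intro nn_integral_cong_AE eventually_mono[OF AE_lborel_singleton[of 0]])
       (auto simp: indicator_def)
  also have "\<dots> = (- exp (-c)) - (- exp (-0))"
    using c by (intro nn_integral_FTC_Icc[where F="\<lambda>x. - exp (-x)"]) (auto intro!: derivative_eq_intros)
  finally show ?thesis by simp
qed




locale stab =
  fixes \<alpha> :: real and f :: "real \<Rightarrow> real"
  assumes a0: "0 < \<alpha>" and a1: "\<alpha> < 1" and psd: "pos_stable_density \<alpha> f"
begin

lemma f_meas[measurable]: "f \<in> borel_measurable borel"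
  using psd by (simp add: pos_stable_density_def)

lemma f_nn: "0 \<le> f t"
  using psd by (simp add: pos_stable_density_def)

lemma f_neg: "t \<le> 0 \<Longrightarrow> f t = 0"
  using psd by (simp add: pos_stable_density_def)

lemma lapS:
  assumes l: "l \<ge> 0"
  shows "(\<integral>\<^sup>+t. ennreal (f t) * ennreal (exp (-(l * t))) \<partial>lborel) = ennreal (exp (-(l powr \<alpha>)))"
proof -
  have hb: "has_bochner_integral lborel (\<lambda>t. exp (-(l*t)) * f t) (exp (-(l powr \<alpha>)))"
    using psd l by (simp add: pos_stable_density_def)
  have "(\<integral>\<^sup>+t. ennreal (exp (-(l*t)) * f t) \<partial>lborel) = ennreal (integral\<^sup>L lborel (\<lambda>t. exp (-(l*t)) * f t))"
    using hb f_nn by (intro nn_integral_eq_integral) (auto simp: has_bochner_integral_iff)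
  also have "integral\<^sup>L lborel (\<lambda>t. exp (-(l*t)) * f t) = exp (-(l powr \<alpha>))"
    using hb by (simp add: has_bochner_integral_iff)
  finally show ?thesis using f_nn by (simp add: ennreal_mult'[symmetric] mult.commute)
qed

definition cc :: "real \<Rightarrow> ennreal" where
  "cc \<theta> = (\<integral>\<^sup>+x. ennreal (if 0 < x then x powr (\<theta> - 1) * exp (-(x powr \<alpha>)) else 0) \<partial>lborel)"

lemma cc_fin:
  assumes th: "\<theta> > 0"
  shows "cc \<theta> \<le> ennreal (1/\<alpha> * Gamma (\<theta>/\<alpha>))"
proof -
  define p where "p = 1/\<alpha>"
  have p1: "p > 1" using a0 a1 by (simp add: p_def)
  define h where "h x = (if 0 < x then x powr (\<theta> - 1) * exp (-(x powr \<alpha>)) else 0)" for x :: real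
  have [measurable]: "h \<in> borel_measurable borel" unfolding h_def by measurable
  have h0: "h x \<ge> 0" for x by (simp add: h_def)
  define I where "I m = {(1 / real (Suc m)) powr p .. real (Suc m) powr p}" for m :: nat
  have bnd: "(\<integral>\<^sup>+x. ennreal (h x * indicator (I m) x) \<partial>lborel) \<le> ennreal (1/\<alpha> * Gamma (\<theta>/\<alpha>))" for m
  proof -
    define a :: real where "a = 1 / real (Suc m)"
    define b :: real where "b = real (Suc m)"
    have ab: "0 < a" "a \<le> b" by (auto simp: a_def b_def field_simps)
    have "(\<integral>\<^sup>+x. ennreal (h x * indicator (I m) x) \<partial>lborel)
        = (\<integral>\<^sup>+x. h x * indicator {(\<lambda>u. u powr p) a .. (\<lambda>u. u powr p) b} x \<partial>lborel)"
      by (simp add: I_def a_def b_def)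
    also have "\<dots> = (\<integral>\<^sup>+u. h (u powr p) * (p * u powr (p - 1)) * indicator {a..b} u \<partial>lborel)"
    proof (rule nn_integral_substitution)
      show "set_borel_measurable borel {a powr p..b powr p} h" by (simp add: set_borel_measurable_def)
      show "((\<lambda>u. u powr p) has_real_derivative p * x powr (p - 1)) (at x)" if "x \<in> {a..b}" for x
        using that ab by (auto intro!: derivative_eq_intros)
      show "continuous_on {a..b} (\<lambda>x. p * x powr (p - 1))"
        using ab by (auto intro!: continuous_intros)
      show "0 \<le> p * x powr (p - 1)" if "x \<in> {a..b}" for x using p1 by simp
    qed (use ab in auto)
    also have "\<dots> = (\<integral>\<^sup>+u. ennreal (1/\<alpha>) * ennreal ((if 0 < u then u powr (\<theta>/\<alpha> - 1) * exp (-(1 * u)) else 0) * indicator {a..b} u) \<partial>lborel)"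
    proof (intro nn_integral_cong)
      fix u :: real
      show "ennreal (h (u powr p) * (p * u powr (p - 1)) * indicator {a..b} u) =
         ennreal (1/\<alpha>) * ennreal ((if 0 < u then u powr (\<theta>/\<alpha> - 1) * exp (-(1 * u)) else 0) * indicator {a..b} u)"
      proof (cases "u \<in> {a..b}")
        case True
        then have u: "u > 0" using ab by auto
        have "(u powr p) powr \<alpha> = u" using u a0 by (simp add: powr_powr p_def)
        moreover have "(u powr p) powr (\<theta> - 1) * u powr (p - 1) = u powr (\<theta>/\<alpha> - 1)"
        proof -
          have e: "p * (\<theta> - 1) + (p - 1) = \<theta>/\<alpha> - 1" using a0 by (simp add: p_def field_simps)
          have "(u powr p) powr (\<theta> - 1) * u powr (p - 1) = u powr (p * (\<theta> - 1) + (p - 1))"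
            using u by (simp add: powr_powr powr_add)
          then show ?thesis by (simp only: e)
        qed
        ultimately have "h (u powr p) * (p * u powr (p - 1)) = 1/\<alpha> * (u powr (\<theta>/\<alpha> - 1) * exp (-(1 * u)))"
          using u by (simp add: h_def p_def)
        then show ?thesis using True u a0 by (simp add: ennreal_mult'[symmetric])
      qed auto
    qed
    also have "\<dots> = ennreal (1/\<alpha>) * (\<integral>\<^sup>+u. ennreal ((if 0 < u then u powr (\<theta>/\<alpha> - 1) * exp (-(1 * u)) else 0) * indicator {a..b} u) \<partial>lborel)"
      by (rule nn_integral_cmult) auto
    also have "\<dots> \<le> ennreal (1/\<alpha>) * (\<integral>\<^sup>+u. ennreal (if 0 < u then u powr (\<theta>/\<alpha> - 1) * exp (-(1 * u)) else 0) \<partial>lborel)"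
      by (intro mult_left_mono nn_integral_mono) (auto simp: indicator_def)
    also have "\<dots> = ennreal (1/\<alpha>) * ennreal (Gamma (\<theta>/\<alpha>) / 1 powr (\<theta>/\<alpha>))"
      using th a0 by (subst Gamma_nn) auto
    also have "\<dots> = ennreal (1/\<alpha> * Gamma (\<theta>/\<alpha>))"
      using a0 th by (simp add: ennreal_mult'[symmetric])
    finally show ?thesis .
  qed
  have inc: "incseq (\<lambda>m x. ennreal (h x * indicator (I m) x))"
  proof (intro incseq_SucI le_funI)
    fix m x
    have i1: "(1/real (Suc (Suc m))) powr p \<le> (1/real (Suc m)) powr p"
      using p1 by (intro powr_mono2) (auto simp: field_simps)
    have i2: "real (Suc m) powr p \<le> real (Suc (Suc m)) powr p"
      using p1 by (intro powr_mono2) auto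
    have "I m \<subseteq> I (Suc m)" unfolding I_def using i1 i2 by auto
    then show "ennreal (h x * indicator (I m) x) \<le> ennreal (h (x) * indicator (I (Suc m)) x)"
      using h0[of x] by (auto simp: indicator_def)
  qed
  have sup: "ennreal (h x) = (SUP m. ennreal (h x * indicator (I m) x))" for x
  proof (cases "x > 0")
    case True
    obtain n :: nat where n1: "x powr \<alpha> \<le> real n" using real_arch_simple by blast
    obtain n2 :: nat where n2: "(1/x) powr \<alpha> \<le> real n2" using real_arch_simple by blast
    define m where "m = n + n2"
    have "x \<le> real (Suc m) powr p"
    proof -
      have "x = (x powr \<alpha>) powr p" using True a0 by (simp add: powr_powr p_def)
      also have "\<dots> \<le> real (Suc m) powr p" using n1 p1 by (intro powr_mono2) (auto simp: m_def)
      finally show ?thesis .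
    qed
    moreover have "(1 / real (Suc m)) powr p \<le> x"
    proof -
      have "1/x = ((1/x) powr \<alpha>) powr p" using True a0 by (simp add: powr_powr p_def)
      also have "\<dots> \<le> real (Suc m) powr p" using n2 p1 by (intro powr_mono2) (auto simp: m_def)
      finally have "1/x \<le> real (Suc m) powr p" .
      then have "1 / real (Suc m) powr p \<le> x" using True
        by (simp add: field_simps)
      then show ?thesis by (simp add: powr_divide)
    qed
    ultimately have xm: "x \<in> I m" by (simp add: I_def)
    show ?thesis
    proof (rule antisym)
      show "ennreal (h x) \<le> (SUP m. ennreal (h x * indicator (I m) x))"
        using xm by (intro SUP_upper2[of m]) auto
      show "(SUP m. ennreal (h x * indicator (I m) x)) \<le> ennreal (h x)"
        using h0[of x] by (intro SUP_least) (auto simp: indicator_def)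
    qed
  qed (simp add: h_def)
  have "cc \<theta> = (\<integral>\<^sup>+x. (SUP m. ennreal (h x * indicator (I m) x)) \<partial>lborel)"
    unfolding cc_def by (subst sup[symmetric]) (simp add: h_def)
  also have "\<dots> = (SUP m. \<integral>\<^sup>+x. ennreal (h x * indicator (I m) x) \<partial>lborel)"
    by (rule nn_integral_monotone_convergence_SUP[OF inc]) (auto simp: I_def)
  also have "\<dots> \<le> ennreal (1/\<alpha> * Gamma (\<theta>/\<alpha>))"
    by (intro SUP_least bnd)
  finally show ?thesis .
qed

lemma cc_pos:
  assumes th: "\<theta> > 0"
  shows "cc \<theta> > 0"
proof (rule ccontr)
  assume "\<not> cc \<theta> > 0"
  then have "cc \<theta> = 0" by simp
  then have "AE x in lborel. ennreal (if 0 < x then x powr (\<theta> - 1) * exp (-(x powr \<alpha>)) else 0) = 0"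
    unfolding cc_def by (subst (asm) nn_integral_0_iff_AE) auto
  then have "AE x in lborel. (x::real) \<le> 0"
  proof -
    have Px: "x \<le> 0" if A: "ennreal (if 0 < x then x powr (\<theta> - 1) * exp (-(x powr \<alpha>)) else 0) = 0" for x :: real
    proof (rule ccontr)
      assume "\<not> x \<le> 0"
      then have "x powr (\<theta> - 1) * exp (-(x powr \<alpha>)) > 0" by simp
      then show False using A \<open>\<not> x \<le> 0\<close> by simp
    qed
    show ?thesis using \<open>AE x in lborel. _\<close> by (rule AE_mp) (intro AE_I2 impI Px)
  qed
  then obtain N where N: "{x \<in> space lborel. \<not> x \<le> (0::real)} \<subseteq> N" "emeasure lborel N = 0" "N \<in> sets lborel"
    by (auto elim!: AE_E)
  have "emeasure lborel {0<..(1::real)} \<le> emeasure lborel N"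
    using N by (intro emeasure_mono) auto
  then show False using N by simp
qed

end


context stab begin

lemma Nnn:
  assumes th: "\<theta> > 0"
  shows "ennreal (Gamma \<theta>) * (\<integral>\<^sup>+s. ennreal (if 0 < s then s powr (-\<theta>) * f s else 0) \<partial>lborel) = cc \<theta>"
proof -
  have G: "Gamma \<theta> > 0" using th by (rule Gamma_real_pos)
  have "ennreal (Gamma \<theta>) * (\<integral>\<^sup>+s. ennreal (if 0 < s then s powr (-\<theta>) * f s else 0) \<partial>lborel)
     = (\<integral>\<^sup>+s. ennreal (Gamma \<theta>) * ennreal (if 0 < s then s powr (-\<theta>) * f s else 0) \<partial>lborel)"
    by (rule nn_integral_cmult[symmetric]) auto
  also have "\<dots> = (\<integral>\<^sup>+s. \<integral>\<^sup>+x. ennreal (f s) * ennreal (if 0 < x then x powr (\<theta> - 1) * exp (-(s * x)) else 0) \<partial>lborel \<partial>lborel)"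
  proof (intro nn_integral_cong)
    fix s :: real
    show "ennreal (Gamma \<theta>) * ennreal (if 0 < s then s powr (-\<theta>) * f s else 0)
       = (\<integral>\<^sup>+x. ennreal (f s) * ennreal (if 0 < x then x powr (\<theta> - 1) * exp (-(s * x)) else 0) \<partial>lborel)"
    proof (cases "s > 0")
      case True
      have "(\<integral>\<^sup>+x. ennreal (f s) * ennreal (if 0 < x then x powr (\<theta> - 1) * exp (-(s * x)) else 0) \<partial>lborel)
          = ennreal (f s) * ennreal (Gamma \<theta> / s powr \<theta>)"
        using th True by (subst nn_integral_cmult) (auto simp: Gamma_nn)
      also have "\<dots> = ennreal (Gamma \<theta>) * ennreal (if 0 < s then s powr (-\<theta>) * f s else 0)"
        using True G f_nn[of s] by (simp add: ennreal_mult'[symmetric] powr_minus field_simps)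
      finally show ?thesis by simp
    qed (simp add: f_neg)
  qed
  also have "\<dots> = (\<integral>\<^sup>+x. \<integral>\<^sup>+s. ennreal (f s) * ennreal (if 0 < x then x powr (\<theta> - 1) * exp (-(s * x)) else 0) \<partial>lborel \<partial>lborel)"
    by (rule lborel_pair.Fubini') measurable
  also have "\<dots> = (\<integral>\<^sup>+x. ennreal (if 0 < x then x powr (\<theta> - 1) * exp (-(x powr \<alpha>)) else 0) \<partial>lborel)"
  proof (intro nn_integral_cong)
    fix x :: real
    show "(\<integral>\<^sup>+s. ennreal (f s) * ennreal (if 0 < x then x powr (\<theta> - 1) * exp (-(s * x)) else 0) \<partial>lborel)
       = ennreal (if 0 < x then x powr (\<theta> - 1) * exp (-(x powr \<alpha>)) else 0)"
    proof (cases "x > 0")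
      case True
      have "(\<integral>\<^sup>+s. ennreal (f s) * ennreal (if 0 < x then x powr (\<theta> - 1) * exp (-(s * x)) else 0) \<partial>lborel)
          = (\<integral>\<^sup>+s. ennreal (x powr (\<theta> - 1)) * (ennreal (f s) * ennreal (exp (-(x * s)))) \<partial>lborel)"
        using True by (intro nn_integral_cong) (simp add: ennreal_mult'[symmetric] mult_ac)
      also have "\<dots> = ennreal (x powr (\<theta> - 1)) * ennreal (exp (-(x powr \<alpha>)))"
        using True by (subst nn_integral_cmult) (auto simp: lapS)
      finally show ?thesis using True by (simp add: ennreal_mult'[symmetric])
    qed simp
  qed
  finally show ?thesis by (simp add: cc_def)
qed

definition cr :: "real \<Rightarrow> real" where "cr \<theta> = enn2real (cc \<theta>)"

lemma cc_cr: "\<theta> > 0 \<Longrightarrow> cc \<theta> = ennreal (cr \<theta>)"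
  unfolding cr_def using cc_fin[of \<theta>] by (intro ennreal_enn2real[symmetric]) (auto intro: le_less_trans[OF _ ennreal_less_top])

lemma cr_pos: "\<theta> > 0 \<Longrightarrow> cr \<theta> > 0"
  using cc_pos[of \<theta>] cc_cr[of \<theta>] by simp

definition Nz :: "real \<Rightarrow> real" where
  "Nz \<theta> = (LINT s|lborel. (if 0 < s then s powr (-\<theta>) * f s else 0))"

lemma Nz_nn: assumes th: "\<theta> > 0"
  shows "(\<integral>\<^sup>+s. ennreal (if 0 < s then s powr (-\<theta>) * f s else 0) \<partial>lborel) = ennreal (cr \<theta> / Gamma \<theta>)"
proof -
  have G: "Gamma \<theta> > 0" using th by (rule Gamma_real_pos)
  have "ennreal (Gamma \<theta>) * (\<integral>\<^sup>+s. ennreal (if 0 < s then s powr (-\<theta>) * f s else 0) \<partial>lborel) = ennreal (Gamma \<theta>) * ennreal (cr \<theta> / Gamma \<theta>)"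
    using Nnn[OF th] cc_cr[OF th] G cr_pos[OF th] by (simp add: ennreal_mult'[symmetric])
  then show ?thesis using G by (subst (asm) ennreal_mult_cancel_left) auto
qed

lemma Nz_val: assumes th: "\<theta> > 0"
  shows "Nz \<theta> = cr \<theta> / Gamma \<theta>" "has_bochner_integral lborel (\<lambda>s. if 0 < s then s powr (-\<theta>) * f s else 0) (cr \<theta> / Gamma \<theta>)"
proof -
  have G: "Gamma \<theta> > 0" using th by (rule Gamma_real_pos)
  show hb: "has_bochner_integral lborel (\<lambda>s. if 0 < s then s powr (-\<theta>) * f s else 0) (cr \<theta> / Gamma \<theta>)"
    using G cr_pos[OF th] Nz_nn[OF th] f_nn by (intro has_bochner_integral_nn_integral) auto
  then show "Nz \<theta> = cr \<theta> / Gamma \<theta>" unfolding Nz_def by (simp add: has_bochner_integral_iff)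
qed

lemma Nz_pos: "\<theta> > 0 \<Longrightarrow> Nz \<theta> > 0"
  using Nz_val(1)[of \<theta>] cr_pos[of \<theta>] Gamma_real_pos[of \<theta>] by simp

end



definition gd :: "real \<Rightarrow> real \<Rightarrow> real" where
  "gd a x = (if 0 < x then x powr (a - 1) * exp (-x) / Gamma a else 0)"

lemma gd_meas[measurable]: "gd a \<in> borel_measurable borel"
  unfolding gd_def by measurable

lemma gd_nn: "a > 0 \<Longrightarrow> 0 \<le> gd a x"
  using Gamma_real_pos[of a] by (simp add: gd_def)

lemma gamma_law_gd: "gamma_law a = density lborel (\<lambda>x. ennreal (gd a x))"
  by (simp add: gamma_law_def gd_def)

lemma prob_density:
  assumes [measurable]: "g \<in> borel_measurable borel" and I: "(\<integral>\<^sup>+x. g x \<partial>lborel) = 1"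
  shows "prob_space (density lborel g)"
  by (rule prob_spaceI) (simp add: emeasure_density I)

lemma gd_int: assumes a: "a > 0" shows "(\<integral>\<^sup>+x. ennreal (gd a x) \<partial>lborel) = 1"
proof -
  have G: "Gamma a > 0" using a by (rule Gamma_real_pos)
  have "(\<integral>\<^sup>+x. ennreal (gd a x) \<partial>lborel) = (\<integral>\<^sup>+x. ennreal (1 / Gamma a) * ennreal (if 0 < x then x powr (a - 1) * exp (-(1 * x)) else 0) \<partial>lborel)"
    using G by (intro nn_integral_cong) (simp add: gd_def ennreal_mult'[symmetric])
  also have "\<dots> = ennreal (1 / Gamma a) * ennreal (Gamma a / 1 powr a)"
    using a by (subst nn_integral_cmult) (auto simp: Gamma_nn)
  also have "\<dots> = 1" using G by (simp add: ennreal_mult'[symmetric])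
  finally show ?thesis .
qed

lemma prob_gamma: "a > 0 \<Longrightarrow> prob_space (gamma_law a)"
  unfolding gamma_law_gd by (rule prob_density) (auto simp: gd_int)

lemma sets_gamma[simp]: "sets (gamma_law a) = sets borel"
  by (simp add: gamma_law_def)

definition bd :: "real \<Rightarrow> real \<Rightarrow> real" where
  "bd a x = (if 0 < x \<and> x < 1 then x powr (a - 1) * (1 - x) powr ((1 - a) - 1) / Beta a (1 - a) else 0)"

lemma bd_meas[measurable]: "bd a \<in> borel_measurable borel"
  unfolding bd_def by measurable

lemma beta_law_bd: "a < 1 \<Longrightarrow> beta_law a (1 - a) = density lborel (\<lambda>x. ennreal (bd a x))"
  by (simp add: beta_law_def bd_def)

lemma beta_law_1: "beta_law a 0 = return borel 1"
  by (simp add: beta_law_def)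

lemma Beta_pos': "a > 0 \<Longrightarrow> b > 0 \<Longrightarrow> Beta a b > (0::real)"
  by (simp add: Beta_def Gamma_real_pos)

lemma bd_nn: "0 < a \<Longrightarrow> a < 1 \<Longrightarrow> 0 \<le> bd a x"
  using Beta_pos'[of a "1 - a"] by (simp add: bd_def)

lemma bd_int: assumes a: "0 < a" "a < 1" shows "(\<integral>\<^sup>+x. ennreal (bd a x) \<partial>lborel) = 1"
proof -
  have B: "Beta a (1 - a) > 0" using a by (intro Beta_pos') auto
  have "(\<integral>\<^sup>+x. ennreal (bd a x) \<partial>lborel) = (\<integral>\<^sup>+x. ennreal (1 / Beta a (1 - a)) * (ennreal (x powr (a - 1) * (1 - x) powr ((1 - a) - 1)) * indicator {0..1} x) \<partial>lborel)"
    using B by (intro nn_integral_cong_AE eventually_mono[OF eventually_conj[OF AE_lborel_singleton[of 0] AE_lborel_singleton[of 1]]])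
       (auto simp: bd_def indicator_def ennreal_mult'[symmetric])
  also have "\<dots> = ennreal (1 / Beta a (1 - a)) * (\<integral>\<^sup>+x. ennreal (x powr (a - 1) * (1 - x) powr ((1 - a) - 1)) * indicator {0..1} x \<partial>lborel)"
    by (subst nn_integral_cmult) auto
  also have "(\<integral>\<^sup>+x. ennreal (x powr (a - 1) * (1 - x) powr ((1 - a) - 1)) * indicator {0..1} x \<partial>lborel) = ennreal (Beta a (1 - a))"
    using a by (intro nn_integral_has_integral_lebesgue' has_integral_Beta_real) auto
  finally show ?thesis using B by (simp add: ennreal_mult'[symmetric])
qed

lemma prob_beta: assumes "0 < a" "a \<le> 1" shows "prob_space (beta_law a (1 - a))"
proof (cases "a = 1")
  case True
  then show ?thesis by (simp add: beta_law_1 prob_space_return)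
next
  case False
  then have a1: "a < 1" using assms by simp
  have "prob_space (density lborel (\<lambda>x. ennreal (bd a x)))"
    using a1 assms by (intro prob_density) (auto simp: bd_int)
  then show ?thesis using beta_law_bd[OF a1] by simp
qed

lemma sets_beta[simp]: "sets (beta_law a b) = sets borel"
  by (simp add: beta_law_def)

context stab begin

definition td :: "real \<Rightarrow> real \<Rightarrow> real" where
  "td \<theta> t = (if 0 < t then t powr (-\<theta>) * f t / Nz \<theta> else 0)"

lemma td_meas[measurable]: "td \<theta> \<in> borel_measurable borel"
  unfolding td_def by measurable

lemma td_nn: "\<theta> > 0 \<Longrightarrow> 0 \<le> td \<theta> t"
  using Nz_pos[of \<theta>] f_nn[of t] by (simp add: td_def)

lemma tilted_td: "tilted_stable_law f \<theta> = density lborel (\<lambda>t. ennreal (td \<theta> t))"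
  unfolding tilted_stable_law_def td_def Nz_def by (rule refl)

lemma td_int: assumes th: "\<theta> > 0" shows "(\<integral>\<^sup>+x. ennreal (td \<theta> x) \<partial>lborel) = 1"
proof -
  have N: "Nz \<theta> > 0" using th by (rule Nz_pos)
  have "(\<integral>\<^sup>+x. ennreal (td \<theta> x) \<partial>lborel) = (\<integral>\<^sup>+x. ennreal (1 / Nz \<theta>) * ennreal (if 0 < x then x powr (-\<theta>) * f x else 0) \<partial>lborel)"
    using N by (intro nn_integral_cong) (simp add: td_def ennreal_mult'[symmetric])
  also have "\<dots> = ennreal (1 / Nz \<theta>) * ennreal (cr \<theta> / Gamma \<theta>)"
    using th by (subst nn_integral_cmult) (auto simp: Nz_nn)
  also have "\<dots> = 1" using N Nz_val(1)[OF th] cr_pos[OF th] Gamma_real_pos[OF th] by (simp add: ennreal_mult'[symmetric])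
  finally show ?thesis .
qed

lemma prob_tilted: "\<theta> > 0 \<Longrightarrow> prob_space (tilted_stable_law f \<theta>)"
  unfolding tilted_td by (rule prob_density) (auto simp: td_int)

lemma prob_stable: "prob_space (stable_law f)"
proof -
  have "(\<integral>\<^sup>+x. ennreal (f x) \<partial>lborel) = (\<integral>\<^sup>+t. ennreal (f t) * ennreal (exp (-(0 * t))) \<partial>lborel)" by simp
  also have "\<dots> = 1" using a0 by (subst lapS) auto
  finally show ?thesis unfolding stable_law_def by (intro prob_density) auto
qed

lemma sets_stable[simp]: "sets (stable_law f) = sets borel" "sets (tilted_stable_law f \<theta>) = sets borel"
  by (simp_all add: stable_law_def tilted_stable_law_def)

lemma prob_X: "\<theta> > 0 \<Longrightarrow> prob_space (X_law f \<theta>)"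
  unfolding X_law_def by (intro prob_ratio prob_stable prob_tilted) auto

lemma sets_X[simp]: "sets (X_law f \<theta>) = sets borel" "sets (X_sigma_law f \<theta>) = sets borel"
  by (simp_all add: X_law_def X_sigma_law_def)

lemma prob_Xs: "0 < \<sigma> \<Longrightarrow> \<sigma> \<le> 1 \<Longrightarrow> prob_space (X_sigma_law f \<sigma>)"
  unfolding X_sigma_law_def by (intro prob_prod prob_X prob_beta) auto

end


context stab begin

lemma cc_scale:
  assumes k: "k > 0"
  shows "(\<integral>\<^sup>+x. ennreal (if 0 < x then x powr (\<theta> - 1) * exp (-((k * x) powr \<alpha>)) else 0) \<partial>lborel) = ennreal (k powr (-\<theta>)) * cc \<theta>"
proof -
  have "(\<integral>\<^sup>+x. ennreal (if 0 < x then x powr (\<theta> - 1) * exp (-((k * x) powr \<alpha>)) else 0) \<partial>lborel)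
    = ennreal (1/k) * (\<integral>\<^sup>+x. ennreal (if 0 < (1/k) * x then ((1/k) * x) powr (\<theta> - 1) * exp (-((k * ((1/k) * x)) powr \<alpha>)) else 0) \<partial>lborel)"
    using k by (intro nn_scale) auto
  also have "(\<integral>\<^sup>+x. ennreal (if 0 < (1/k) * x then ((1/k) * x) powr (\<theta> - 1) * exp (-((k * ((1/k) * x)) powr \<alpha>)) else 0) \<partial>lborel)
     = (\<integral>\<^sup>+x. ennreal (k powr (1 - \<theta>)) * ennreal (if 0 < x then x powr (\<theta> - 1) * exp (-(x powr \<alpha>)) else 0) \<partial>lborel)"
  proof (rule nn_integral_cong)
    fix x :: real
    show "ennreal (if 0 < (1/k) * x then ((1/k) * x) powr (\<theta> - 1) * exp (-((k * ((1/k) * x)) powr \<alpha>)) else 0)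
      = ennreal (k powr (1 - \<theta>)) * ennreal (if 0 < x then x powr (\<theta> - 1) * exp (-(x powr \<alpha>)) else 0)"
    proof (cases "x > 0")
      case True
      have "((1/k) * x) powr (\<theta> - 1) = k powr (1 - \<theta>) * x powr (\<theta> - 1)"
        using k True by (simp add: powr_mult powr_divide powr_minus_divide[symmetric] powr_diff divide_simps)
      moreover have "k * ((1/k) * x) = x" using k by simp
      ultimately show ?thesis using True k by (simp add: ennreal_mult'[symmetric])
    next
      case False
      then show ?thesis using k by (auto simp: zero_less_mult_iff zero_less_divide_iff)
    qed
  qed
  also have "\<dots> = ennreal (k powr (1 - \<theta>)) * cc \<theta>"
    unfolding cc_def by (rule nn_integral_cmult) auto
  also have "ennreal (1/k) * (ennreal (k powr (1 - \<theta>)) * cc \<theta>) = ennreal (k powr (-\<theta>)) * cc \<theta>"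
  proof -
    have "1/k * k powr (1 - \<theta>) = k powr (-\<theta>)" using k by (simp add: powr_diff powr_minus field_simps)
    then show ?thesis using k by (simp add: ennreal_mult'[symmetric] mult.assoc[symmetric])
  qed
  finally show ?thesis .
qed

definition Fz :: "real \<Rightarrow> real \<Rightarrow> real" where
  "Fz \<theta> y = (if 0 < y then y powr \<theta> * (1 + y powr \<alpha>) powr (-\<theta> / \<alpha>) else 0)"

lemma core:
  assumes th: "\<theta> > 0" and y: "y > 0"
  shows "(\<integral>\<^sup>+g. ennreal (gd \<theta> g) * (\<integral>\<^sup>+s'. ennreal (td \<theta> s') * ennreal (exp (-((g / (s' * y)) powr \<alpha>))) \<partial>lborel) \<partial>lborel)
    = ennreal (Fz \<theta> y)"
proof -
  have G: "Gamma \<theta> > 0" using th by (rule Gamma_real_pos)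
  have N: "Nz \<theta> > 0" using th by (rule Nz_pos)
  define K where "K = 1 / (Gamma \<theta> * Nz \<theta>)"
  have K: "K > 0" using G N by (simp add: K_def)
  define \<phi> where "\<phi> x = (if 0 < x then x powr (\<theta> - 1) * exp (-((x / y) powr \<alpha>)) else 0)" for x
  have [measurable]: "\<phi> \<in> borel_measurable borel" unfolding \<phi>_def by measurable
  have "(\<integral>\<^sup>+g. ennreal (gd \<theta> g) * (\<integral>\<^sup>+s'. ennreal (td \<theta> s') * ennreal (exp (-((g / (s' * y)) powr \<alpha>))) \<partial>lborel) \<partial>lborel)
     = (\<integral>\<^sup>+g. \<integral>\<^sup>+s'. ennreal (gd \<theta> g) * (ennreal (td \<theta> s') * ennreal (exp (-((g / (s' * y)) powr \<alpha>)))) \<partial>lborel \<partial>lborel)"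
    by (intro nn_integral_cong nn_integral_cmult[symmetric]) auto
  also have "\<dots> = (\<integral>\<^sup>+s'. \<integral>\<^sup>+g. ennreal (gd \<theta> g) * (ennreal (td \<theta> s') * ennreal (exp (-((g / (s' * y)) powr \<alpha>)))) \<partial>lborel \<partial>lborel)"
    by (rule lborel_pair.Fubini'[symmetric]) measurable
  also have "\<dots> = (\<integral>\<^sup>+s'. \<integral>\<^sup>+x. ennreal K * ennreal (\<phi> x) * (ennreal (f s') * ennreal (exp (-(x * s')))) \<partial>lborel \<partial>lborel)"
  proof (rule nn_integral_cong)
    fix s' :: real
    show "(\<integral>\<^sup>+g. ennreal (gd \<theta> g) * (ennreal (td \<theta> s') * ennreal (exp (-((g / (s' * y)) powr \<alpha>)))) \<partial>lborel)
      = (\<integral>\<^sup>+x. ennreal K * ennreal (\<phi> x) * (ennreal (f s') * ennreal (exp (-(x * s')))) \<partial>lborel)"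
    proof (cases "s' > 0")
      case True
      have "(\<integral>\<^sup>+g. ennreal (gd \<theta> g) * (ennreal (td \<theta> s') * ennreal (exp (-((g / (s' * y)) powr \<alpha>)))) \<partial>lborel)
        = ennreal s' * (\<integral>\<^sup>+x. ennreal (gd \<theta> (s' * x)) * (ennreal (td \<theta> s') * ennreal (exp (-((s' * x / (s' * y)) powr \<alpha>)))) \<partial>lborel)"
        using True by (intro nn_scale) auto
      also have "\<dots> = (\<integral>\<^sup>+x. ennreal s' * (ennreal (gd \<theta> (s' * x)) * (ennreal (td \<theta> s') * ennreal (exp (-((s' * x / (s' * y)) powr \<alpha>))))) \<partial>lborel)"
        by (rule nn_integral_cmult[symmetric]) auto
      also have "\<dots> = (\<integral>\<^sup>+x. ennreal K * ennreal (\<phi> x) * (ennreal (f s') * ennreal (exp (-(x * s')))) \<partial>lborel)"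
      proof (rule nn_integral_cong)
        fix x :: real
        show "ennreal s' * (ennreal (gd \<theta> (s' * x)) * (ennreal (td \<theta> s') * ennreal (exp (-((s' * x / (s' * y)) powr \<alpha>)))))
          = ennreal K * ennreal (\<phi> x) * (ennreal (f s') * ennreal (exp (-(x * s'))))"
        proof (cases "x > 0")
          case xp: True
          have e1: "s' * x / (s' * y) = x / y" using True by simp
          have e2: "s' * ((s' * x) powr (\<theta> - 1) * exp (-(s' * x)) / Gamma \<theta>) * (s' powr (-\<theta>) * f s' / Nz \<theta>)
              = K * (x powr (\<theta> - 1)) * (f s' * exp (-(x * s')))"
          proof -
            have "s' * (s' * x) powr (\<theta> - 1) * s' powr (-\<theta>) = x powr (\<theta> - 1)"
              using True xp by (simp add: powr_mult powr_minus powr_diff field_simps)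
            then show ?thesis by (simp add: K_def field_simps)
          qed
          have sx: "s' * x > 0" using True xp by simp
          have P: "s' * (s' * x) powr (\<theta> - 1) * s' powr (-\<theta>) = x powr (\<theta> - 1)"
            using True xp by (simp add: powr_mult powr_minus powr_diff field_simps)
          have "s' * (gd \<theta> (s' * x) * (td \<theta> s' * exp (-((s' * x / (s' * y)) powr \<alpha>))))
             = (s' * (s' * x) powr (\<theta> - 1) * s' powr (-\<theta>)) * (f s' * exp (-(x * s'))) * exp (-((x / y) powr \<alpha>)) / (Gamma \<theta> * Nz \<theta>)"
            using sx True by (simp add: gd_def td_def e1 mult_ac)
          also have "\<dots> = K * \<phi> x * (f s' * exp (-(x * s')))"
            using xp by (simp only: P) (simp add: K_def \<phi>_def)
          finally have R: "s' * (gd \<theta> (s' * x) * (td \<theta> s' * exp (-((s' * x / (s' * y)) powr \<alpha>))))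
             = K * \<phi> x * (f s' * exp (-(x * s')))" .
          have nn: "0 \<le> gd \<theta> (s' * x)" "0 \<le> td \<theta> s'" "0 \<le> \<phi> x" "0 \<le> f s'"
            using gd_nn[OF th] td_nn[OF th] f_nn by (auto simp: \<phi>_def)
          have L1: "ennreal s' * (ennreal (gd \<theta> (s' * x)) * (ennreal (td \<theta> s') * ennreal (exp (-((s' * x / (s' * y)) powr \<alpha>)))))
             = ennreal (s' * (gd \<theta> (s' * x) * (td \<theta> s' * exp (-((s' * x / (s' * y)) powr \<alpha>)))))"
            using True nn by (simp add: ennreal_mult)
          have L2: "ennreal K * ennreal (\<phi> x) * (ennreal (f s') * ennreal (exp (-(x * s'))))
             = ennreal (K * \<phi> x * (f s' * exp (-(x * s'))))"
            using K nn by (simp add: ennreal_mult)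
          show ?thesis unfolding L1 L2 R ..
        next
          case False
          then show ?thesis using True by (simp add: gd_def \<phi>_def zero_less_mult_iff)
        qed
      qed
      finally show ?thesis .
    next
      case False
      then show ?thesis by (simp add: td_def f_neg)
    qed
  qed
  also have "\<dots> = (\<integral>\<^sup>+x. \<integral>\<^sup>+s'. ennreal K * ennreal (\<phi> x) * (ennreal (f s') * ennreal (exp (-(x * s')))) \<partial>lborel \<partial>lborel)"
    by (rule lborel_pair.Fubini') measurable
  also have "\<dots> = (\<integral>\<^sup>+x. ennreal K * ennreal (if 0 < x then x powr (\<theta> - 1) * exp (-(((1 + y powr (-\<alpha>)) powr (1/\<alpha>) * x) powr \<alpha>)) else 0) \<partial>lborel)"
  proof (rule nn_integral_cong)
    fix x :: real
    show "(\<integral>\<^sup>+s'. ennreal K * ennreal (\<phi> x) * (ennreal (f s') * ennreal (exp (-(x * s')))) \<partial>lborel)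
      = ennreal K * ennreal (if 0 < x then x powr (\<theta> - 1) * exp (-(((1 + y powr (-\<alpha>)) powr (1/\<alpha>) * x) powr \<alpha>)) else 0)"
    proof (cases "x > 0")
      case True
      have "(\<integral>\<^sup>+s'. ennreal K * ennreal (\<phi> x) * (ennreal (f s') * ennreal (exp (-(x * s')))) \<partial>lborel)
         = ennreal K * ennreal (\<phi> x) * ennreal (exp (-(x powr \<alpha>)))"
        using True by (subst nn_integral_cmult) (auto simp: lapS)
      also have "\<phi> x * exp (-(x powr \<alpha>)) = x powr (\<theta> - 1) * exp (-(((1 + y powr (-\<alpha>)) powr (1/\<alpha>) * x) powr \<alpha>))"
      proof -
        have "((1 + y powr (-\<alpha>)) powr (1/\<alpha>) * x) powr \<alpha> = (1 + y powr (-\<alpha>)) * x powr \<alpha>"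
          using True a0 y by (simp add: powr_mult powr_powr)
        moreover have "(x / y) powr \<alpha> = y powr (-\<alpha>) * x powr \<alpha>"
          using True y by (simp add: powr_divide powr_minus field_simps)
        ultimately show ?thesis using True by (simp add: \<phi>_def distrib_right exp_add[symmetric] algebra_simps)
      qed
      ultimately show ?thesis using True K
        by (simp add: ennreal_mult'[symmetric] \<phi>_def mult.assoc del: ennreal_mult)
    next
      case False
      then show ?thesis by (simp add: \<phi>_def)
    qed
  qed
  also have "\<dots> = ennreal K * (ennreal (((1 + y powr (-\<alpha>)) powr (1/\<alpha>)) powr (-\<theta>)) * cc \<theta>)"
  proof -
    have "0 < 1 + y powr (-\<alpha>)" by (simp add: add_pos_nonneg)
    then have kp: "0 < (1 + y powr (-\<alpha>)) powr (1/\<alpha>)" by simp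
    show ?thesis by (subst nn_integral_cmult) (auto simp: cc_scale[OF kp])
  qed
  also have "\<dots> = ennreal (Fz \<theta> y)"
  proof -
    have ccv: "cc \<theta> = ennreal (Gamma \<theta> * Nz \<theta>)" using cc_cr[OF th] Nz_val(1)[OF th] G by simp
    have "((1 + y powr (-\<alpha>)) powr (1/\<alpha>)) powr (-\<theta>) = Fz \<theta> y"
    proof -
      have "((1 + y powr (-\<alpha>)) powr (1/\<alpha>)) powr (-\<theta>) = (1 + y powr (-\<alpha>)) powr (-\<theta> / \<alpha>)"
        by (simp add: powr_powr)
      also have "\<dots> = ((1 + y powr \<alpha>) / y powr \<alpha>) powr (-\<theta> / \<alpha>)"
        using y by (simp add: powr_minus field_simps)
      also have "((1 + y powr \<alpha>) / y powr \<alpha>) powr (-\<theta> / \<alpha>) = (1 + y powr \<alpha>) powr (-\<theta> / \<alpha>) / (y powr \<alpha>) powr (-\<theta> / \<alpha>)"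
        using y by (simp add: powr_divide)
      also have "(y powr \<alpha>) powr (-\<theta> / \<alpha>) = 1 / y powr \<theta>"
        using y a0 by (simp add: powr_powr powr_minus inverse_eq_divide)
      finally show ?thesis using y by (simp add: Fz_def)
    qed
    moreover have "K * (Gamma \<theta> * Nz \<theta>) = 1" using G N by (simp add: K_def)
    ultimately have "K * ((((1 + y powr (-\<alpha>)) powr (1/\<alpha>)) powr (-\<theta>)) * (Gamma \<theta> * Nz \<theta>)) = Fz \<theta> y"
      by (simp add: mult_ac)
    moreover have "0 \<le> ((1 + y powr (-\<alpha>)) powr (1/\<alpha>)) powr (-\<theta>)" by simp
    ultimately show ?thesis using K G N
      by (simp add: ccv ennreal_mult''[symmetric] del: ennreal_mult ennreal_mult'')
  qed
  finally show ?thesis .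
qed

end



lemma gd1: "gd 1 e = (if 0 < e then exp (-e) else 0)"
  by (simp add: gd_def)

lemma e_inner:
  fixes c y :: real assumes c: "c > 0"
  shows "(\<integral>\<^sup>+e. ennreal (gd 1 e) * indicator {..y} (c / e) \<partial>lborel) = (if 0 < y then ennreal (exp (-(c / y))) else 0)"
proof (cases "y > 0")
  case True
  have "(\<integral>\<^sup>+e. ennreal (gd 1 e) * indicator {..y} (c / e) \<partial>lborel)
      = (\<integral>\<^sup>+e. ennreal (if 0 < e then exp (-e) else 0) * indicator {c / y..} e \<partial>lborel)"
  proof (rule nn_integral_cong)
    fix e :: real
    show "ennreal (gd 1 e) * indicator {..y} (c / e) = ennreal (if 0 < e then exp (-e) else 0) * indicator {c / y..} e"
    proof (cases "e > 0")
      case True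
      then have "c / e \<le> y \<longleftrightarrow> c / y \<le> e" using c \<open>y > 0\<close> by (simp add: field_simps)
      then show ?thesis using True by (simp add: gd1 indicator_def)
    qed (simp add: gd1)
  qed
  also have "\<dots> = ennreal (exp (-(c / y)))" using c True by (intro exp_tail) auto
  finally show ?thesis using True by simp
next
  case False
  have "(\<integral>\<^sup>+e. ennreal (gd 1 e) * indicator {..y} (c / e) \<partial>lborel) = (\<integral>\<^sup>+e. 0 \<partial>(lborel::real measure))"
  proof (rule nn_integral_cong)
    fix e :: real
    show "ennreal (gd 1 e) * indicator {..y} (c / e) = 0"
    proof (cases "e > 0")
      case True
      then have "c / e > 0" using c by simp
      then show ?thesis using False by (simp add: indicator_def)
    qed (simp add: gd1)
  qed
  then show ?thesis using False by simp
qed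

context stab begin

lemma sf_X: "\<theta> > 0 \<Longrightarrow> sigma_finite_measure (X_law f \<theta>)"
  by (rule prob_space_imp_sigma_finite[OF prob_X])

lemma inner_es:
  assumes th: "\<theta> > 0" and g: "g > 0" and y: "y > 0"
  shows "(\<integral>\<^sup>+q. \<integral>\<^sup>+e. ennreal (gd 1 e) * indicator {..y} (g / e * q) \<partial>lborel \<partial>X_law f \<theta>)
    = (\<integral>\<^sup>+s'. ennreal (td \<theta> s') * ennreal (exp (-((g / (s' * y)) powr \<alpha>))) \<partial>lborel)"
proof -
  have "(\<integral>\<^sup>+q. \<integral>\<^sup>+e. ennreal (gd 1 e) * indicator {..y} (g / e * q) \<partial>lborel \<partial>X_law f \<theta>)
     = (\<integral>\<^sup>+s'. \<integral>\<^sup>+s. (\<integral>\<^sup>+e. ennreal (gd 1 e) * indicator {..y} (g / e * (s / s')) \<partial>lborel) \<partial>stable_law f \<partial>tilted_stable_law f \<theta>)"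
    unfolding X_law_def
    by (rule nn_ratio2) (auto intro!: prob_space_imp_sigma_finite prob_stable prob_tilted th)
  also have "\<dots> = (\<integral>\<^sup>+s'. ennreal (td \<theta> s') * \<integral>\<^sup>+s. ennreal (f s) * (\<integral>\<^sup>+e. ennreal (gd 1 e) * indicator {..y} (g / e * (s / s')) \<partial>lborel) \<partial>lborel \<partial>lborel)"
    unfolding tilted_td stable_law_def by (simp add: nn_integral_density)
  also have "\<dots> = (\<integral>\<^sup>+s'. ennreal (td \<theta> s') * ennreal (exp (-((g / (s' * y)) powr \<alpha>))) \<partial>lborel)"
  proof (rule nn_integral_cong)
    fix s' :: real
    show "ennreal (td \<theta> s') * (\<integral>\<^sup>+s. ennreal (f s) * (\<integral>\<^sup>+e. ennreal (gd 1 e) * indicator {..y} (g / e * (s / s')) \<partial>lborel) \<partial>lborel)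
       = ennreal (td \<theta> s') * ennreal (exp (-((g / (s' * y)) powr \<alpha>)))"
    proof (cases "s' > 0")
      case sp: True
      have "(\<integral>\<^sup>+s. ennreal (f s) * (\<integral>\<^sup>+e. ennreal (gd 1 e) * indicator {..y} (g / e * (s / s')) \<partial>lborel) \<partial>lborel)
         = (\<integral>\<^sup>+s. ennreal (f s) * ennreal (exp (-((g / (s' * y)) * s))) \<partial>lborel)"
      proof (rule nn_integral_cong)
        fix s :: real
        show "ennreal (f s) * (\<integral>\<^sup>+e. ennreal (gd 1 e) * indicator {..y} (g / e * (s / s')) \<partial>lborel)
            = ennreal (f s) * ennreal (exp (-((g / (s' * y)) * s)))"
        proof (cases "s > 0")
          case True
          have eq: "g / e * (s / s') = (g * s / s') / e" for e by simp
          have "(\<integral>\<^sup>+e. ennreal (gd 1 e) * indicator {..y} (g / e * (s / s')) \<partial>lborel) = ennreal (exp (-((g * s / s') / y)))"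
            unfolding eq using True sp g y by (subst e_inner) auto
          also have "(g * s / s') / y = (g / (s' * y)) * s" by simp
          finally show ?thesis by simp
        qed (simp add: f_neg)
      qed
      also have "\<dots> = ennreal (exp (-((g / (s' * y)) powr \<alpha>)))"
        using g sp y by (subst lapS) auto
      finally show ?thesis by simp
    qed (simp add: td_def)
  qed
  finally show ?thesis .
qed

lemma inner_es0:
  assumes th: "\<theta> > 0" and g: "g > 0" and y: "y \<le> 0"
  shows "(\<integral>\<^sup>+q. \<integral>\<^sup>+e. ennreal (gd 1 e) * indicator {..y} (g / e * q) \<partial>lborel \<partial>X_law f \<theta>) = 0"
proof -
  have "(\<integral>\<^sup>+q. \<integral>\<^sup>+e. ennreal (gd 1 e) * indicator {..y} (g / e * q) \<partial>lborel \<partial>X_law f \<theta>)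
     = (\<integral>\<^sup>+s'. \<integral>\<^sup>+s. (\<integral>\<^sup>+e. ennreal (gd 1 e) * indicator {..y} (g / e * (s / s')) \<partial>lborel) \<partial>stable_law f \<partial>tilted_stable_law f \<theta>)"
    unfolding X_law_def
    by (rule nn_ratio2) (auto intro!: prob_space_imp_sigma_finite prob_stable prob_tilted th)
  also have "\<dots> = (\<integral>\<^sup>+s'. ennreal (td \<theta> s') * \<integral>\<^sup>+s. ennreal (f s) * (\<integral>\<^sup>+e. ennreal (gd 1 e) * indicator {..y} (g / e * (s / s')) \<partial>lborel) \<partial>lborel \<partial>lborel)"
    unfolding tilted_td stable_law_def by (simp add: nn_integral_density)
  also have "\<dots> = (\<integral>\<^sup>+s'. 0 \<partial>(lborel::real measure))"
  proof (rule nn_integral_cong)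
    fix s' :: real
    show "ennreal (td \<theta> s') * (\<integral>\<^sup>+s. ennreal (f s) * (\<integral>\<^sup>+e. ennreal (gd 1 e) * indicator {..y} (g / e * (s / s')) \<partial>lborel) \<partial>lborel) = 0"
    proof (cases "s' > 0")
      case sp: True
      have "(\<integral>\<^sup>+s. ennreal (f s) * (\<integral>\<^sup>+e. ennreal (gd 1 e) * indicator {..y} (g / e * (s / s')) \<partial>lborel) \<partial>lborel)
         = (\<integral>\<^sup>+s. 0 \<partial>(lborel::real measure))"
      proof (rule nn_integral_cong)
        fix s :: real
        show "ennreal (f s) * (\<integral>\<^sup>+e. ennreal (gd 1 e) * indicator {..y} (g / e * (s / s')) \<partial>lborel) = 0"
        proof (cases "s > 0")
          case True
          have eq: "g / e * (s / s') = (g * s / s') / e" for e by simp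
          show ?thesis
            unfolding eq using True sp g y by (subst e_inner) auto
        qed (simp add: f_neg)
      qed
      then show ?thesis by simp
    qed (simp add: td_def)
  qed
  finally show ?thesis by simp
qed

end



lemma swap_lb:
  assumes M: "sigma_finite_measure M" and sM: "sets M = sets borel"
    and F: "case_prod F \<in> borel_measurable (borel \<Otimes>\<^sub>M borel)"
  shows "(\<integral>\<^sup>+x. \<integral>\<^sup>+y. F x y \<partial>M \<partial>lborel) = (\<integral>\<^sup>+y. \<integral>\<^sup>+x. F x y \<partial>lborel \<partial>M)"
proof -
  interpret pair_sigma_finite lborel M
    using M by (simp add: pair_sigma_finite_def sigma_finite_lborel)
  have e: "borel_measurable (lborel \<Otimes>\<^sub>M M) = borel_measurable (borel \<Otimes>\<^sub>M borel)"
    by (intro measurable_cong_sets sets_pair_measure_cong) (simp_all add: sM)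
  have "case_prod F \<in> borel_measurable (lborel \<Otimes>\<^sub>M M)"
    unfolding e by (rule F)
  then show ?thesis by (rule Fubini'[symmetric])
qed

lemma meas_param:
  assumes M: "sigma_finite_measure M" and sM: "sets M = sets borel"
    and F: "case_prod F \<in> borel_measurable (borel \<Otimes>\<^sub>M borel)"
  shows "(\<lambda>x. \<integral>\<^sup>+y. F x y \<partial>M) \<in> borel_measurable borel"
proof -
  have e: "borel_measurable (borel \<Otimes>\<^sub>M M) = borel_measurable (borel \<Otimes>\<^sub>M borel)"
    by (intro measurable_cong_sets sets_pair_measure_cong) (simp_all add: sM)
  have "case_prod F \<in> borel_measurable (borel \<Otimes>\<^sub>M M)"
    unfolding e by (rule F)
  then show ?thesis by (rule sigma_finite_measure.borel_measurable_nn_integral[OF M])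
qed

context stab begin

lemma meas_X[simp]: "measurable (X_law f \<theta>) N = measurable borel N"
  by (rule measurable_cong_sets) auto

definition ES :: "real \<Rightarrow> real \<Rightarrow> ennreal" where
  "ES \<theta> y = (\<integral>\<^sup>+g. ennreal (gd \<theta> g) * (\<integral>\<^sup>+q. \<integral>\<^sup>+e. ennreal (gd 1 e) * indicator {..y} (g / e * q) \<partial>lborel \<partial>X_law f \<theta>) \<partial>lborel)"

lemma ES_val:
  assumes th: "\<theta> > 0" shows "ES \<theta> y = ennreal (Fz \<theta> y)"
proof (cases "y > 0")
  case True
  have "ES \<theta> y = (\<integral>\<^sup>+g. ennreal (gd \<theta> g) * (\<integral>\<^sup>+s'. ennreal (td \<theta> s') * ennreal (exp (-((g / (s' * y)) powr \<alpha>))) \<partial>lborel) \<partial>lborel)"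
    unfolding ES_def
  proof (rule nn_integral_cong)
    fix g :: real
    show "ennreal (gd \<theta> g) * (\<integral>\<^sup>+q. \<integral>\<^sup>+e. ennreal (gd 1 e) * indicator {..y} (g / e * q) \<partial>lborel \<partial>X_law f \<theta>)
      = ennreal (gd \<theta> g) * (\<integral>\<^sup>+s'. ennreal (td \<theta> s') * ennreal (exp (-((g / (s' * y)) powr \<alpha>))) \<partial>lborel)"
      using inner_es[OF th _ True, of g] by (cases "g > 0") (auto simp: gd_def)
  qed
  also have "\<dots> = ennreal (Fz \<theta> y)" using th True by (rule core)
  finally show ?thesis .
next
  case False
  have "ES \<theta> y = (\<integral>\<^sup>+g. 0 \<partial>(lborel::real measure))"
    unfolding ES_def
  proof (rule nn_integral_cong)
    fix g :: real
    show "ennreal (gd \<theta> g) * (\<integral>\<^sup>+q. \<integral>\<^sup>+e. ennreal (gd 1 e) * indicator {..y} (g / e * q) \<partial>lborel \<partial>X_law f \<theta>) = 0"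
      using inner_es0[OF th _, of g y] False by (cases "g > 0") (auto simp: gd_def)
  qed
  then show ?thesis using False by (simp add: Fz_def)
qed

lemma E_cdf:
  assumes th: "\<theta> > 0"
  shows "emeasure (prod_law (ratio_law (gamma_law \<theta>) (gamma_law 1)) (X_law f \<theta>)) {..y} = ES \<theta> y"
proof -
  have sfX: "sigma_finite_measure (X_law f \<theta>)" using th by (rule sf_X)
  have sfG: "sigma_finite_measure (gamma_law 1)" by (intro prob_space_imp_sigma_finite prob_gamma) simp
  define H where "H p = (\<integral>\<^sup>+q. indicator {..y} (p * q) \<partial>X_law f \<theta>)" for p :: real
  have Hm[measurable]: "H \<in> borel_measurable borel"
    unfolding H_def by (rule meas_param[OF sfX]) auto
  have "emeasure (prod_law (ratio_law (gamma_law \<theta>) (gamma_law 1)) (X_law f \<theta>)) {..y}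
     = (\<integral>\<^sup>+z. indicator {..y} z \<partial>prod_law (ratio_law (gamma_law \<theta>) (gamma_law 1)) (X_law f \<theta>))"
    by (subst nn_integral_indicator) auto
  also have "\<dots> = (\<integral>\<^sup>+p. H p \<partial>ratio_law (gamma_law \<theta>) (gamma_law 1))"
    unfolding H_def by (rule nn_prod1[OF sfX]) auto
  also have "\<dots> = (\<integral>\<^sup>+g. \<integral>\<^sup>+e. H (g / e) \<partial>gamma_law 1 \<partial>gamma_law \<theta>)"
    by (rule nn_ratio1[OF sfG]) auto
  also have "\<dots> = (\<integral>\<^sup>+g. ennreal (gd \<theta> g) * (\<integral>\<^sup>+e. ennreal (gd 1 e) * H (g / e) \<partial>lborel) \<partial>lborel)"
    unfolding gamma_law_gd by (simp add: nn_integral_density)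
  also have "\<dots> = ES \<theta> y"
    unfolding ES_def
  proof (rule nn_integral_cong)
    fix g :: real
    have "(\<integral>\<^sup>+e. ennreal (gd 1 e) * H (g / e) \<partial>lborel) = (\<integral>\<^sup>+e. \<integral>\<^sup>+q. ennreal (gd 1 e) * indicator {..y} (g / e * q) \<partial>X_law f \<theta> \<partial>lborel)"
      unfolding H_def by (intro nn_integral_cong nn_integral_cmult[symmetric]) auto
    also have "\<dots> = (\<integral>\<^sup>+q. \<integral>\<^sup>+e. ennreal (gd 1 e) * indicator {..y} (g / e * q) \<partial>lborel \<partial>X_law f \<theta>)"
      by (rule swap_lb[OF sfX]) auto
    finally show "ennreal (gd \<theta> g) * (\<integral>\<^sup>+e. ennreal (gd 1 e) * H (g / e) \<partial>lborel)
      = ennreal (gd \<theta> g) * (\<integral>\<^sup>+q. \<integral>\<^sup>+e. ennreal (gd 1 e) * indicator {..y} (g / e * q) \<partial>lborel \<partial>X_law f \<theta>)" by simp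
  qed
  finally show ?thesis .
qed

end


lemma nn_pow:
  fixes M :: "real measure"
  assumes sM: "sets M = sets borel" and h[measurable]: "h \<in> borel_measurable borel"
  shows "(\<integral>\<^sup>+z. h z \<partial>pow_law M p) = (\<integral>\<^sup>+x. h (x powr p) \<partial>M)"
proof -
  have m: "(\<lambda>x. x powr p) \<in> measurable M borel"
    unfolding measurable_cong_sets[OF sM refl] by measurable
  show ?thesis unfolding pow_law_def by (subst nn_integral_distr[OF m]) auto
qed

context stab begin

lemma Fz_alt: assumes y: "y > 0" shows "Fz \<theta> y = (1 + y powr (-\<alpha>)) powr (-\<theta> / \<alpha>)"
proof -
  have "(1 + y powr (-\<alpha>)) powr (-\<theta> / \<alpha>) = ((1 + y powr \<alpha>) / y powr \<alpha>) powr (-\<theta> / \<alpha>)"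
    using y by (simp add: powr_minus field_simps)
  also have "\<dots> = (1 + y powr \<alpha>) powr (-\<theta> / \<alpha>) / (y powr \<alpha>) powr (-\<theta> / \<alpha>)"
    using y by (simp add: powr_divide)
  also have "(y powr \<alpha>) powr (-\<theta> / \<alpha>) = 1 / y powr \<theta>"
    using y a0 by (simp add: powr_powr powr_minus inverse_eq_divide)
  finally show ?thesis using y by (simp add: Fz_def)
qed

lemma gexp:
  assumes th: "\<theta> > 0" and y: "y > 0"
  shows "(\<integral>\<^sup>+g. ennreal (gd (\<theta>/\<alpha>) g) * ennreal (exp (-(g / y powr \<alpha>))) \<partial>lborel) = ennreal (Fz \<theta> y)"
proof -
  define a where "a = \<theta>/\<alpha>"
  have a: "a > 0" using th a0 by (simp add: a_def)
  have G: "Gamma a > 0" using a by (rule Gamma_real_pos)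
  define b where "b = 1 + y powr (-\<alpha>)"
  have b: "b > 0" by (simp add: b_def add_pos_nonneg)
  have "(\<integral>\<^sup>+g. ennreal (gd a g) * ennreal (exp (-(g / y powr \<alpha>))) \<partial>lborel)
     = (\<integral>\<^sup>+g. ennreal (1 / Gamma a) * ennreal (if 0 < g then g powr (a - 1) * exp (-(b * g)) else 0) \<partial>lborel)"
  proof (rule nn_integral_cong)
    fix g :: real
    have "exp (-g) * exp (-(g / y powr \<alpha>)) = exp (-(b * g))"
      using y by (simp add: b_def exp_add[symmetric] powr_minus field_simps)
    then show "ennreal (gd a g) * ennreal (exp (-(g / y powr \<alpha>)))
      = ennreal (1 / Gamma a) * ennreal (if 0 < g then g powr (a - 1) * exp (-(b * g)) else 0)"
      using G by (auto simp: gd_def ennreal_mult'[symmetric] mult_ac)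
  qed
  also have "\<dots> = ennreal (1 / Gamma a) * ennreal (Gamma a / b powr a)"
    using a b by (subst nn_integral_cmult) (auto simp: Gamma_nn)
  also have "\<dots> = ennreal (b powr (-a))"
    using G b by (simp add: ennreal_mult'[symmetric] powr_minus field_simps)
  also have "b powr (-a) = Fz \<theta> y"
    using y by (simp add: Fz_alt a_def b_def)
  finally show ?thesis by (simp add: a_def)
qed

lemma C_cdf:
  assumes th: "\<theta> > 0"
  shows "emeasure (pow_law (ratio_law (gamma_law (\<theta> / \<alpha>)) (gamma_law 1)) (1 / \<alpha>)) {..y} = ennreal (Fz \<theta> y)"
proof -
  have sfG: "sigma_finite_measure (gamma_law 1)" by (intro prob_space_imp_sigma_finite prob_gamma) simp
  have "emeasure (pow_law (ratio_law (gamma_law (\<theta> / \<alpha>)) (gamma_law 1)) (1 / \<alpha>)) {..y}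
     = (\<integral>\<^sup>+z. indicator {..y} z \<partial>pow_law (ratio_law (gamma_law (\<theta> / \<alpha>)) (gamma_law 1)) (1 / \<alpha>))"
    by (subst nn_integral_indicator) auto
  also have "\<dots> = (\<integral>\<^sup>+x. indicator {..y} (x powr (1/\<alpha>)) \<partial>ratio_law (gamma_law (\<theta> / \<alpha>)) (gamma_law 1))"
    by (rule nn_pow) auto
  also have "\<dots> = (\<integral>\<^sup>+g. \<integral>\<^sup>+e. indicator {..y} ((g / e) powr (1/\<alpha>)) \<partial>gamma_law 1 \<partial>gamma_law (\<theta> / \<alpha>))"
    by (rule nn_ratio1[OF sfG]) auto
  also have "\<dots> = (\<integral>\<^sup>+g. ennreal (gd (\<theta>/\<alpha>) g) * (\<integral>\<^sup>+e. ennreal (gd 1 e) * indicator {..y} ((g / e) powr (1/\<alpha>)) \<partial>lborel) \<partial>lborel)"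
    unfolding gamma_law_gd by (simp add: nn_integral_density)
  also have "\<dots> = (\<integral>\<^sup>+g. ennreal (gd (\<theta>/\<alpha>) g) * (if 0 < y then ennreal (exp (-(g / y powr \<alpha>))) else 0) \<partial>lborel)"
  proof (rule nn_integral_cong)
    fix g :: real
    show "ennreal (gd (\<theta>/\<alpha>) g) * (\<integral>\<^sup>+e. ennreal (gd 1 e) * indicator {..y} ((g / e) powr (1/\<alpha>)) \<partial>lborel)
      = ennreal (gd (\<theta>/\<alpha>) g) * (if 0 < y then ennreal (exp (-(g / y powr \<alpha>))) else 0)"
    proof (cases "g > 0")
      case gp: True
      have "(\<integral>\<^sup>+e. ennreal (gd 1 e) * indicator {..y} ((g / e) powr (1/\<alpha>)) \<partial>lborel)
         = (if 0 < y powr \<alpha> \<and> 0 < y then ennreal (exp (-(g / y powr \<alpha>))) else 0)"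
      proof (cases "y > 0")
        case True
        have "(\<integral>\<^sup>+e. ennreal (gd 1 e) * indicator {..y} ((g / e) powr (1/\<alpha>)) \<partial>lborel)
            = (\<integral>\<^sup>+e. ennreal (gd 1 e) * indicator {..y powr \<alpha>} (g / e) \<partial>lborel)"
        proof (rule nn_integral_cong)
          fix e :: real
          show "ennreal (gd 1 e) * indicator {..y} ((g / e) powr (1/\<alpha>)) = ennreal (gd 1 e) * indicator {..y powr \<alpha>} (g / e)"
          proof (cases "e > 0")
            case True
            have q: "g / e > 0" using gp True by simp
            have "(g / e) powr (1/\<alpha>) \<le> y \<longleftrightarrow> ((g / e) powr (1/\<alpha>)) powr \<alpha> \<le> y powr \<alpha>"
            proof
              assume "(g / e) powr (1/\<alpha>) \<le> y"
              then show "((g / e) powr (1/\<alpha>)) powr \<alpha> \<le> y powr \<alpha>" using a0 by (intro powr_mono2) auto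
            next
              assume R: "((g / e) powr (1/\<alpha>)) powr \<alpha> \<le> y powr \<alpha>"
              show "(g / e) powr (1/\<alpha>) \<le> y"
              proof (rule ccontr)
                assume "\<not> (g / e) powr (1/\<alpha>) \<le> y"
                then have "y powr \<alpha> < ((g / e) powr (1/\<alpha>)) powr \<alpha>"
                  using a0 \<open>y > 0\<close> by (intro powr_less_mono2) auto
                then show False using R by simp
              qed
            qed
            also have "((g / e) powr (1/\<alpha>)) powr \<alpha> = g / e" using a0 q gp True by (simp add: powr_powr)
            finally show ?thesis by (simp add: indicator_def)
          qed (simp add: gd1)
        qed
        also have "\<dots> = (if 0 < y powr \<alpha> then ennreal (exp (-(g / y powr \<alpha>))) else 0)"
          using gp by (rule e_inner)
        finally show ?thesis using True by simp
      next
        case False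
        have "(\<integral>\<^sup>+e. ennreal (gd 1 e) * indicator {..y} ((g / e) powr (1/\<alpha>)) \<partial>lborel) = (\<integral>\<^sup>+e. 0 \<partial>(lborel::real measure))"
        proof (rule nn_integral_cong)
          fix e :: real
          show "ennreal (gd 1 e) * indicator {..y} ((g / e) powr (1/\<alpha>)) = 0"
          proof (cases "e > 0")
            case True
            then have h: "(g / e) powr (1/\<alpha>) > 0" using gp by simp
            have "\<not> (g / e) powr (1/\<alpha>) \<le> y" using h False by linarith
            then show ?thesis by (simp add: indicator_def)
          qed (simp add: gd1)
        qed
        then show ?thesis using False by simp
      qed
      then show ?thesis by (cases "y > 0") auto
    qed (simp add: gd_def)
  qed
  also have "\<dots> = ennreal (Fz \<theta> y)"
    using gexp[OF th] by (cases "y > 0") (auto simp: Fz_def)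
  finally show ?thesis .
qed

end


context stab begin

lemma D_cdf:
  assumes th: "\<theta> > 0"
  shows "emeasure (ratio_law (chi_law \<alpha> f \<theta>) (gamma_law 1)) {..y} = ennreal (Fz \<theta> y)"
proof -
  have sfG: "sigma_finite_measure (gamma_law 1)" by (intro prob_space_imp_sigma_finite prob_gamma) simp
  have sfS: "sigma_finite_measure (stable_law f)" by (intro prob_space_imp_sigma_finite prob_stable)
  define H where "H z = (\<integral>\<^sup>+e. indicator {..y} (z / e) \<partial>gamma_law 1)" for z :: real
  have Hm[measurable]: "H \<in> borel_measurable borel"
    unfolding H_def by (rule meas_param[OF sfG]) auto
  define K where "K u = (\<integral>\<^sup>+s. H (u * s) \<partial>stable_law f)" for u :: real
  have Km[measurable]: "K \<in> borel_measurable borel"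
    unfolding K_def by (rule meas_param[OF sfS]) auto
  have "emeasure (ratio_law (chi_law \<alpha> f \<theta>) (gamma_law 1)) {..y}
     = (\<integral>\<^sup>+z. indicator {..y} z \<partial>ratio_law (chi_law \<alpha> f \<theta>) (gamma_law 1))"
    by (subst nn_integral_indicator) auto
  also have "\<dots> = (\<integral>\<^sup>+z. H z \<partial>chi_law \<alpha> f \<theta>)"
    unfolding H_def by (rule nn_ratio1[OF sfG]) (auto simp: chi_law_def)
  also have "\<dots> = (\<integral>\<^sup>+u. K u \<partial>pow_law (gamma_law (\<theta> / \<alpha>)) (1 / \<alpha>))"
    unfolding chi_law_def K_def by (rule nn_prod1[OF sfS]) auto
  also have "\<dots> = (\<integral>\<^sup>+g. K (g powr (1/\<alpha>)) \<partial>gamma_law (\<theta> / \<alpha>))"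
    by (rule nn_pow) auto
  also have "\<dots> = (\<integral>\<^sup>+g. ennreal (gd (\<theta>/\<alpha>) g) * (\<integral>\<^sup>+s. ennreal (f s) * (\<integral>\<^sup>+e. ennreal (gd 1 e) * indicator {..y} (g powr (1/\<alpha>) * s / e) \<partial>lborel) \<partial>lborel) \<partial>lborel)"
    unfolding gamma_law_gd K_def H_def stable_law_def by (simp add: nn_integral_density)
  also have "\<dots> = (\<integral>\<^sup>+g. ennreal (gd (\<theta>/\<alpha>) g) * (if 0 < y then ennreal (exp (-(g / y powr \<alpha>))) else 0) \<partial>lborel)"
  proof (rule nn_integral_cong)
    fix g :: real
    show "ennreal (gd (\<theta>/\<alpha>) g) * (\<integral>\<^sup>+s. ennreal (f s) * (\<integral>\<^sup>+e. ennreal (gd 1 e) * indicator {..y} (g powr (1/\<alpha>) * s / e) \<partial>lborel) \<partial>lborel)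
      = ennreal (gd (\<theta>/\<alpha>) g) * (if 0 < y then ennreal (exp (-(g / y powr \<alpha>))) else 0)"
    proof (cases "g > 0")
      case gp: True
      have "(\<integral>\<^sup>+s. ennreal (f s) * (\<integral>\<^sup>+e. ennreal (gd 1 e) * indicator {..y} (g powr (1/\<alpha>) * s / e) \<partial>lborel) \<partial>lborel)
         = (\<integral>\<^sup>+s. ennreal (f s) * (if 0 < y then ennreal (exp (-((g powr (1/\<alpha>) / y) * s))) else 0) \<partial>lborel)"
      proof (rule nn_integral_cong)
        fix s :: real
        show "ennreal (f s) * (\<integral>\<^sup>+e. ennreal (gd 1 e) * indicator {..y} (g powr (1/\<alpha>) * s / e) \<partial>lborel)
          = ennreal (f s) * (if 0 < y then ennreal (exp (-((g powr (1/\<alpha>) / y) * s))) else 0)"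
        proof (cases "s > 0")
          case True
          have "(\<integral>\<^sup>+e. ennreal (gd 1 e) * indicator {..y} (g powr (1/\<alpha>) * s / e) \<partial>lborel)
              = (if 0 < y then ennreal (exp (-(g powr (1/\<alpha>) * s / y))) else 0)"
            using gp True by (intro e_inner) simp
          then show ?thesis by (simp add: mult_ac)
        qed (simp add: f_neg)
      qed
      also have "\<dots> = (if 0 < y then ennreal (exp (-(g / y powr \<alpha>))) else 0)"
      proof (cases "y > 0")
        case True
        have "(g powr (1/\<alpha>) / y) powr \<alpha> = g / y powr \<alpha>"
          using gp True a0 by (simp add: powr_divide powr_powr)
        moreover have "(\<integral>\<^sup>+s. ennreal (f s) * ennreal (exp (-((g powr (1/\<alpha>) / y) * s))) \<partial>lborel) = ennreal (exp (-((g powr (1/\<alpha>) / y) powr \<alpha>)))"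
          using True gp by (intro lapS) simp
        ultimately show ?thesis using True by simp
      qed simp
      finally show ?thesis by simp
    qed (simp add: gd_def)
  qed
  also have "\<dots> = ennreal (Fz \<theta> y)"
    using gexp[OF th] by (cases "y > 0") (auto simp: Fz_def)
  finally show ?thesis .
qed

end


context stab begin
lemma Fr_deriv:
  assumes th: "\<theta> > 0" and x: "x > 0"
  shows "((\<lambda>x. x powr \<theta> * (1 + x powr \<alpha>) powr (-\<theta> / \<alpha>)) has_real_derivative
      \<theta> * x powr (\<theta> - 1) * (1 + x powr \<alpha>) powr (-(\<theta> + \<alpha>) / \<alpha>)) (at x)"
proof -
  have u: "0 < 1 + x powr \<alpha>" by (simp add: add_pos_nonneg)
  define P where "P = (1 + x powr \<alpha>) powr (- (\<theta> / \<alpha>) - 1)"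
  have e1: "(1 + x powr \<alpha>) powr (- (\<theta> / \<alpha>)) = (1 + x powr \<alpha>) * P"
  proof -
    have "(1 + x powr \<alpha>) powr (- (\<theta> / \<alpha>) - 1 + 1) = (1 + x powr \<alpha>) powr (- (\<theta> / \<alpha>) - 1) * (1 + x powr \<alpha>) powr 1"
      by (rule powr_add)
    then show ?thesis using u by (simp add: P_def mult.commute)
  qed
  have e2: "x powr (\<alpha> - 1) * x powr \<theta> = x powr (\<theta> - 1) * x powr \<alpha>"
    using x by (simp add: powr_add[symmetric] algebra_simps)
  have e3: "(-\<theta> - \<alpha>) / \<alpha> = - (\<theta> / \<alpha>) - 1" using a0 by (simp add: field_simps)
  have alg: "\<theta> * x powr (\<theta> - 1) * (1 + x powr \<alpha>) powr - (\<theta> / \<alpha>) -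
        \<theta> * ((1 + x powr \<alpha>) powr (- (\<theta> / \<alpha>) - 1) * x powr (\<alpha> - 1)) * x powr \<theta> =
        \<theta> * x powr (\<theta> - 1) * (1 + x powr \<alpha>) powr ((-\<theta> - \<alpha>) / \<alpha>)"
  proof -
    have "\<theta> * ((1 + x powr \<alpha>) powr (- (\<theta> / \<alpha>) - 1) * x powr (\<alpha> - 1)) * x powr \<theta>
        = \<theta> * P * (x powr (\<alpha> - 1) * x powr \<theta>)" by (simp add: P_def mult_ac)
    also have "\<dots> = \<theta> * P * (x powr (\<theta> - 1) * x powr \<alpha>)" by (simp only: e2)
    finally have "\<theta> * ((1 + x powr \<alpha>) powr (- (\<theta> / \<alpha>) - 1) * x powr (\<alpha> - 1)) * x powr \<theta>
        = \<theta> * P * (x powr (\<theta> - 1) * x powr \<alpha>)" .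
    then have "\<theta> * x powr (\<theta> - 1) * (1 + x powr \<alpha>) powr - (\<theta> / \<alpha>) -
        \<theta> * ((1 + x powr \<alpha>) powr (- (\<theta> / \<alpha>) - 1) * x powr (\<alpha> - 1)) * x powr \<theta>
        = \<theta> * x powr (\<theta> - 1) * ((1 + x powr \<alpha>) * P) - \<theta> * P * (x powr (\<theta> - 1) * x powr \<alpha>)"
      by (simp only: e1)
    also have "\<dots> = \<theta> * x powr (\<theta> - 1) * P" by (simp add: algebra_simps)
    finally show ?thesis unfolding e3 P_def .
  qed
  show ?thesis
    using x u alg by (auto intro!: derivative_eq_intros)
qed
end


context stab begin

definition wd :: "real \<Rightarrow> real \<Rightarrow> real" where
  "wd \<theta> y = (if 0 < y then \<theta> * y powr (\<theta> - 1) * (1 + y powr \<alpha>) powr (-(\<theta> + \<alpha>) / \<alpha>) else 0)"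

lemma Dens_cdf:
  assumes th: "\<theta> > 0"
  shows "emeasure (density lborel (\<lambda>y. ennreal (wd \<theta> y))) {..y} = ennreal (Fz \<theta> y)"
proof (cases "y > 0")
  case False
  have "emeasure (density lborel (\<lambda>y. ennreal (wd \<theta> y))) {..y} = (\<integral>\<^sup>+x. ennreal (wd \<theta> x) * indicator {..y} x \<partial>lborel)"
    by (subst emeasure_density) (auto simp: wd_def)
  also have "\<dots> = (\<integral>\<^sup>+x. 0 \<partial>(lborel::real measure))"
    using False by (intro nn_integral_cong) (auto simp: wd_def indicator_def)
  finally show ?thesis using False by (simp add: Fz_def)
next
  case True
  define F where "F x = x powr \<theta> * (1 + x powr \<alpha>) powr (-\<theta> / \<alpha>)" for x :: real
  define w where "w x = \<theta> * x powr (\<theta> - 1) * (1 + x powr \<alpha>) powr (-(\<theta> + \<alpha>) / \<alpha>)" for x :: real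
  have FTC: "set_integrable lborel (einterval 0 y) w" "(LBINT x=0..y. w x) = F y - 0"
  proof -
    have A: "((F \<circ> real_of_ereal) \<longlongrightarrow> 0) (at_right (ereal 0))"
    proof -
      have "((\<lambda>x. x powr \<theta> * (1 + x powr \<alpha>) powr (-\<theta> / \<alpha>)) \<longlongrightarrow> 0 powr \<theta> * (1 + 0 powr \<alpha>) powr (-\<theta> / \<alpha>)) (at_right 0)"
      proof -
        have ev: "eventually (\<lambda>x::real. 0 \<le> x) (at_right 0)"
          using eventually_at_right_less[of "0::real"] by (rule eventually_mono) simp
        show ?thesis using th a0 ev by (intro tendsto_intros) auto
      qed
      then show ?thesis unfolding ereal_tendsto_simps F_def using th by simp
    qed
    have B: "((F \<circ> real_of_ereal) \<longlongrightarrow> F y) (at_left (ereal y))"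
    proof -
      have "((\<lambda>x. x powr \<theta> * (1 + x powr \<alpha>) powr (-\<theta> / \<alpha>)) \<longlongrightarrow> y powr \<theta> * (1 + y powr \<alpha>) powr (-\<theta> / \<alpha>)) (at_left y)"
      proof -
        have "0 < 1 + y powr \<alpha>" by (simp add: add_pos_nonneg)
        then show ?thesis using True by (intro tendsto_intros) auto
      qed
      then show ?thesis unfolding ereal_tendsto_simps F_def .
    qed
    have D: "DERIV F x :> w x" if "ereal 0 < ereal x" "ereal x < ereal y" for x
      using Fr_deriv[OF th, of x] that unfolding F_def w_def by simp
    have C: "isCont w x" if "ereal 0 < ereal x" "ereal x < ereal y" for x
    proof -
      have "0 < 1 + x powr \<alpha>" by (simp add: add_pos_nonneg)
      then show ?thesis using that unfolding w_def by (auto intro!: continuous_intros)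
    qed
    have N: "AE x in lborel. ereal 0 < ereal x \<longrightarrow> ereal x < ereal y \<longrightarrow> 0 \<le> w x"
      using th by (auto simp: w_def)
    show "set_integrable lborel (einterval 0 y) w" "(LBINT x=0..y. w x) = F y - 0"
      using interval_integral_FTC_nonneg[of "ereal 0" "ereal y" F w 0 "F y"] True A B C D N
      by (auto simp: zero_ereal_def)
  qed
  have "emeasure (density lborel (\<lambda>y. ennreal (wd \<theta> y))) {..y} = (\<integral>\<^sup>+x. ennreal (wd \<theta> x) * indicator {..y} x \<partial>lborel)"
    by (subst emeasure_density) (auto simp: wd_def)
  also have "\<dots> = (\<integral>\<^sup>+x. ennreal (indicator {0<..<y} x *\<^sub>R w x) \<partial>lborel)"
    by (intro nn_integral_cong_AE eventually_mono[OF AE_lborel_singleton[of y]])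
       (auto simp: wd_def w_def indicator_def)
  also have "\<dots> = ennreal (integral\<^sup>L lborel (\<lambda>x. indicator {0<..<y} x *\<^sub>R w x))"
    using FTC(1) th by (intro nn_integral_eq_integral) (auto simp: set_integrable_def w_def indicator_def zero_ereal_def)
  also have "integral\<^sup>L lborel (\<lambda>x. indicator {0<..<y} x *\<^sub>R w x) = F y"
    using FTC(2) True by (simp add: interval_lebesgue_integral_def set_lebesgue_integral_def zero_ereal_def)
  finally show ?thesis using True by (simp add: F_def Fz_def)
qed

end



lemma powr_le_iff':
  fixes a b r :: real assumes r: "r > 0" and a: "a \<ge> 0" and b: "b \<ge> 0"
  shows "a powr r \<le> b powr r \<longleftrightarrow> a \<le> b"
proof
  assume "a \<le> b" then show "a powr r \<le> b powr r" using r a by (intro powr_mono2) auto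
next
  assume R: "a powr r \<le> b powr r"
  show "a \<le> b"
  proof (rule ccontr)
    assume "\<not> a \<le> b"
    then have "b powr r < a powr r" using r b by (intro powr_less_mono2) auto
    then show False using R by simp
  qed
qed

context stab begin

lemma W_cdf:
  assumes th: "\<theta> > 0"
  shows "emeasure (W_law \<alpha> \<theta>) {..y} = ennreal (Fz \<theta> y)"
proof -
  define p where "p = \<alpha> / \<theta>"
  have p: "p > 0" using a0 th by (simp add: p_def)
  define T where "T u = (u powr (\<alpha> / \<theta>) / (1 - u powr (\<alpha> / \<theta>))) powr (1 / \<alpha>)" for u :: real
  have Tm[measurable]: "T \<in> borel_measurable borel" unfolding T_def by measurable
  have Tm': "T \<in> measurable (uniform_measure lborel {0..1}) borel"
    using Tm by (simp cong: measurable_cong_sets)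
  define S where "S = {0..1} \<inter> T -` {..y}"
  have Tpre: "T -` {..y} \<in> sets borel" using measurable_sets[OF Tm, of "{..y}"] by simp
  have Ss: "S \<in> sets lborel" unfolding S_def using Tpre by auto
  have "emeasure (W_law \<alpha> \<theta>) {..y} = emeasure (uniform_measure lborel {0..1}) (T -` {..y} \<inter> space (uniform_measure lborel {0..1}))"
    unfolding W_law_def T_def[symmetric] by (rule emeasure_distr[OF Tm']) auto
  also have "\<dots> = emeasure lborel S / emeasure lborel {0..(1::real)}"
    unfolding S_def using Tpre by (subst emeasure_uniform_measure) auto
  also have "\<dots> = emeasure lborel S" by (simp add: divide_ennreal_def)
  also have "emeasure lborel S = ennreal (Fz \<theta> y)"
  proof -
    have v01: "0 \<le> u powr p \<and> u powr p < 1" if "0 \<le> u" "u < 1" for u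
    proof -
      have "u powr p < 1 powr p" using that p by (intro powr_less_mono2) auto
      then show ?thesis by simp
    qed
    show ?thesis
    proof (cases "y > 0")
      case False
      have "S \<subseteq> {0, 1}"
      proof
        fix u assume u: "u \<in> S"
        show "u \<in> {0, 1}"
        proof (rule ccontr)
          assume "u \<notin> {0, 1}"
          then have u01: "0 < u" "u < 1" using u by (auto simp: S_def)
          have "u powr p > 0" using u01 by simp
          moreover have "u powr p < 1" using v01[of u] u01 by simp
          ultimately have "u powr p / (1 - u powr p) > 0" by simp
          have "T u = (u powr p / (1 - u powr p)) powr (1/\<alpha>)" by (simp add: T_def p_def)
          then have "T u > 0" using \<open>u powr p < 1\<close> u01 p by simp
          then show False using u False by (simp add: S_def)
        qed
      qed
      then have "emeasure lborel S \<le> emeasure lborel {0, 1::real}" by (intro emeasure_mono) auto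
      moreover have "emeasure lborel {0, 1::real} = 0"
        by (intro null_setsD1 countable_imp_null_set_lborel) auto
      ultimately have "emeasure lborel S = 0" by simp
      then show ?thesis using False by (simp add: Fz_def)
    next
      case True
      define Y where "Y = y powr \<alpha>"
      have Y: "Y > 0" using True by (simp add: Y_def)
      define Z where "Z = Y / (1 + Y)"
      have Z: "0 \<le> Z" "Z < 1" using Y by (auto simp: Z_def field_simps)
      define c where "c = Z powr (1 / p)"
      have c0: "0 \<le> c" by (simp add: c_def)
      have c1: "c \<le> 1"
      proof -
        have "Z powr (1/p) \<le> 1 powr (1/p)" using Z p by (intro powr_mono2) auto
        then show ?thesis by (simp add: c_def)
      qed
      have cF: "c = Fz \<theta> y"
      proof -
        have "c = Y powr (\<theta>/\<alpha>) / (1 + Y) powr (\<theta>/\<alpha>)"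
          using Y by (simp add: c_def Z_def p_def powr_divide)
        also have "Y powr (\<theta>/\<alpha>) = y powr \<theta>" using True a0 by (simp add: Y_def powr_powr)
        finally show ?thesis using True Y by (simp add: Fz_def Y_def powr_minus_divide divide_inverse powr_minus)
      qed
      have key: "T u \<le> y \<longleftrightarrow> u \<le> c" if u: "0 \<le> u" "u < 1" for u
      proof -
        define v where "v = u powr p"
        have v: "0 \<le> v" "v < 1" using v01[OF u] by (auto simp: v_def)
        have X: "v / (1 - v) \<ge> 0" using v by simp
        have "T u \<le> y \<longleftrightarrow> (v / (1 - v)) powr (1/\<alpha>) \<le> (y powr \<alpha>) powr (1/\<alpha>)"
          using True a0 by (simp add: T_def v_def p_def powr_powr)
        also have "\<dots> \<longleftrightarrow> v / (1 - v) \<le> Y" using a0 X True by (simp add: powr_le_iff' Y_def)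
        also have "\<dots> \<longleftrightarrow> v \<le> Z" using v Y by (simp add: Z_def field_simps)
        also have "\<dots> \<longleftrightarrow> v powr (1/p) \<le> Z powr (1/p)" using v Z p by (simp add: powr_le_iff')
        also have "v powr (1/p) = u" using u p by (simp add: v_def powr_powr)
        finally show ?thesis by (simp add: c_def)
      qed
      have T1: "T 1 = 0" by (simp add: T_def)
      have eqS: "S \<union> {1} = {0..c} \<union> {1}"
      proof (intro set_eqI iffI)
        fix u assume "u \<in> S \<union> {1}"
        then show "u \<in> {0..c} \<union> {1}"
        proof
          assume "u \<in> S"
          then have u: "0 \<le> u" "u \<le> 1" "T u \<le> y" by (auto simp: S_def)
          show ?thesis using key[of u] u by (cases "u = 1") auto
        qed simp
      next
        fix u assume "u \<in> {0..c} \<union> {1}"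
        then show "u \<in> S \<union> {1}"
        proof
          assume u: "u \<in> {0..c}"
          show ?thesis
          proof (cases "u = 1")
            case False
            then have "u < 1" using u c1 by auto
            then show ?thesis using key[of u] u c1 by (auto simp: S_def)
          qed simp
        qed simp
      qed
      have n1: "{1::real} \<in> null_sets lborel" by (intro countable_imp_null_set_lborel) simp
      have "emeasure lborel S = emeasure lborel (S \<union> {1})"
        using emeasure_Un_null_set[OF Ss n1] by simp
      also have "\<dots> = emeasure lborel ({0..c} \<union> {1})" by (simp only: eqS)
      also have "\<dots> = emeasure lborel {0..c}" 
        using emeasure_Un_null_set[OF _ n1, of "{0..c}"] by simp
      also have "\<dots> = ennreal c" using c0 by simp
      finally show ?thesis by (simp add: cF)
    qed
  qed
  finally show ?thesis .
qed

end



lemma BG_inner: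
  assumes s: "0 < \<sigma>" "\<sigma> < 1" and g: "g > 0"
  shows "(\<integral>\<^sup>+e. ennreal (gd 1 e * (1 / e) * bd \<sigma> (g / e)) \<partial>lborel) = ennreal (gd \<sigma> g)"
proof -
  define B where "B = Beta \<sigma> (1 - \<sigma>)"
  have B: "B > 0" using s by (simp add: B_def Beta_pos')
  have GS: "Gamma \<sigma> > 0" using s by (intro Gamma_real_pos) simp
  have G1: "Gamma (1 - \<sigma>) > 0" using s by (intro Gamma_real_pos) simp
  have BB: "B = Gamma \<sigma> * Gamma (1 - \<sigma>)" by (simp add: B_def Beta_def)
  have "(\<integral>\<^sup>+e. ennreal (gd 1 e * (1 / e) * bd \<sigma> (g / e)) \<partial>lborel)
      = (\<integral>\<^sup>+v. ennreal (gd 1 (g + v) * (1 / (g + v)) * bd \<sigma> (g / (g + v))) \<partial>lborel)"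
    by (rule nn_shift) measurable
  also have "\<dots> = (\<integral>\<^sup>+v. ennreal (exp (-g) * g powr (\<sigma> - 1) / B) * ennreal (if 0 < v then v powr ((1 - \<sigma>) - 1) * exp (-(1 * v)) else 0) \<partial>lborel)"
  proof (rule nn_integral_cong)
    fix v :: real
    show "ennreal (gd 1 (g + v) * (1 / (g + v)) * bd \<sigma> (g / (g + v)))
       = ennreal (exp (-g) * g powr (\<sigma> - 1) / B) * ennreal (if 0 < v then v powr ((1 - \<sigma>) - 1) * exp (-(1 * v)) else 0)"
    proof (cases "v > 0")
      case True
      have gv: "g + v > 0" using g True by simp
      have q: "0 < g / (g + v)" "g / (g + v) < 1" using g True gv by (auto simp: field_simps)
      have om: "1 - g / (g + v) = v / (g + v)" using gv by (simp add: field_simps)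
      have P: "(1 / (g + v)) * (g / (g + v)) powr (\<sigma> - 1) * (v / (g + v)) powr ((1 - \<sigma>) - 1)
          = g powr (\<sigma> - 1) * v powr ((1 - \<sigma>) - 1)"
      proof -
        define W1 where "W1 = (g + v) powr (\<sigma> - 1)"
        define W2 where "W2 = (g + v) powr ((1 - \<sigma>) - 1)"
        have W: "W1 > 0" "W2 > 0" using gv by (auto simp: W1_def W2_def)
        have d1: "(g / (g + v)) powr (\<sigma> - 1) = g powr (\<sigma> - 1) / W1"
          unfolding W1_def using g gv by (auto intro!: powr_divide)
        have d2: "(v / (g + v)) powr ((1 - \<sigma>) - 1) = v powr ((1 - \<sigma>) - 1) / W2"
          unfolding W2_def using True gv by (auto intro!: powr_divide)
        have d3: "W1 * W2 = 1 / (g + v)"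
        proof -
          have "W1 * W2 = (g + v) powr ((\<sigma> - 1) + ((1 - \<sigma>) - 1))"
            unfolding W1_def W2_def by (rule powr_add[symmetric])
          also have "\<dots> = (g + v) powr (-1)" by simp
          also have "\<dots> = 1 / (g + v)" using gv by (simp add: powr_minus_divide)
          finally show ?thesis .
        qed
        have "(1 / (g + v)) * (g powr (\<sigma> - 1) / W1) * (v powr ((1 - \<sigma>) - 1) / W2)
            = ((1 / (g + v)) / (W1 * W2)) * (g powr (\<sigma> - 1) * v powr ((1 - \<sigma>) - 1))"
          using W by (simp add: field_simps)
        also have "(1 / (g + v)) / (W1 * W2) = 1" using gv by (simp add: d3)
        also have "1 * (g powr (\<sigma> - 1) * v powr ((1 - \<sigma>) - 1)) = g powr (\<sigma> - 1) * v powr ((1 - \<sigma>) - 1)" by simp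
        finally show ?thesis unfolding d1 d2 .
      qed
      have "gd 1 (g + v) * (1 / (g + v)) * bd \<sigma> (g / (g + v))
          = exp (-(g + v)) * ((1 / (g + v)) * (g / (g + v)) powr (\<sigma> - 1) * (v / (g + v)) powr ((1 - \<sigma>) - 1)) / B"
        using gv q by (simp add: gd1 bd_def om B_def)
      also have "\<dots> = exp (-g) * g powr (\<sigma> - 1) / B * (v powr ((1 - \<sigma>) - 1) * exp (-(1 * v)))"
        unfolding P by (simp add: exp_diff exp_minus field_simps)
      finally show ?thesis using True B by (simp add: ennreal_mult'[symmetric])
    next
      case False
      then have "g / (g + v) \<le> 0 \<or> g / (g + v) \<ge> 1 \<or> g + v \<le> 0"
        using g by (auto simp: field_simps)
      then show ?thesis using False by (auto simp: gd1 bd_def)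
    qed
  qed
  also have "\<dots> = ennreal (exp (-g) * g powr (\<sigma> - 1) / B) * ennreal (Gamma (1 - \<sigma>) / 1 powr (1 - \<sigma>))"
    using s by (subst nn_integral_cmult) (auto simp: Gamma_nn)
  also have "\<dots> = ennreal (gd \<sigma> g)"
    using g B GS G1 by (simp add: ennreal_mult'[symmetric] gd_def BB)
  finally show ?thesis .
qed




lemma BG:
  assumes s: "0 < \<sigma>" "\<sigma> \<le> 1" and Pm[measurable]: "\<Psi> \<in> borel_measurable borel"
  shows "(\<integral>\<^sup>+e. ennreal (gd 1 e) * (\<integral>\<^sup>+b. \<Psi> (e * b) \<partial>beta_law \<sigma> (1 - \<sigma>)) \<partial>lborel)
    = (\<integral>\<^sup>+g. ennreal (gd \<sigma> g) * \<Psi> g \<partial>lborel)"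
proof (cases "\<sigma> = 1")
  case True
  then show ?thesis by (simp add: beta_law_1 nn_integral_return)
next
  case False
  then have s1: "\<sigma> < 1" using s by simp
  have "(\<integral>\<^sup>+e. ennreal (gd 1 e) * (\<integral>\<^sup>+b. \<Psi> (e * b) \<partial>beta_law \<sigma> (1 - \<sigma>)) \<partial>lborel)
     = (\<integral>\<^sup>+e. \<integral>\<^sup>+x. ennreal (gd 1 e * (1 / e) * bd \<sigma> (x / e)) * \<Psi> x \<partial>lborel \<partial>lborel)"
  proof (rule nn_integral_cong)
    fix e :: real
    show "ennreal (gd 1 e) * (\<integral>\<^sup>+b. \<Psi> (e * b) \<partial>beta_law \<sigma> (1 - \<sigma>))
      = (\<integral>\<^sup>+x. ennreal (gd 1 e * (1 / e) * bd \<sigma> (x / e)) * \<Psi> x \<partial>lborel)"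
    proof (cases "e > 0")
      case True
      have "(\<integral>\<^sup>+b. \<Psi> (e * b) \<partial>beta_law \<sigma> (1 - \<sigma>)) = (\<integral>\<^sup>+b. ennreal (bd \<sigma> b) * \<Psi> (e * b) \<partial>lborel)"
        unfolding beta_law_bd[OF s1] by (simp add: nn_integral_density)
      also have "\<dots> = ennreal (1 / e) * (\<integral>\<^sup>+x. ennreal (bd \<sigma> ((1 / e) * x)) * \<Psi> (e * ((1 / e) * x)) \<partial>lborel)"
        using True by (intro nn_scale) auto
      also have "\<dots> = ennreal (1 / e) * (\<integral>\<^sup>+x. ennreal (bd \<sigma> (x / e)) * \<Psi> x \<partial>lborel)"
        using True by simp
      finally have A: "(\<integral>\<^sup>+b. \<Psi> (e * b) \<partial>beta_law \<sigma> (1 - \<sigma>)) = ennreal (1 / e) * (\<integral>\<^sup>+x. ennreal (bd \<sigma> (x / e)) * \<Psi> x \<partial>lborel)" .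
      have "ennreal (gd 1 e) * (ennreal (1 / e) * (\<integral>\<^sup>+x. ennreal (bd \<sigma> (x / e)) * \<Psi> x \<partial>lborel))
          = (\<integral>\<^sup>+x. ennreal (gd 1 e) * (ennreal (1 / e) * (ennreal (bd \<sigma> (x / e)) * \<Psi> x)) \<partial>lborel)"
        by (simp add: nn_integral_cmult)
      also have "\<dots> = (\<integral>\<^sup>+x. ennreal (gd 1 e * (1 / e) * bd \<sigma> (x / e)) * \<Psi> x \<partial>lborel)"
      proof (rule nn_integral_cong)
        fix x :: real
        have g0: "0 \<le> gd 1 e * (1 / e)" using True gd_nn[of 1 e] by simp
        have "ennreal (gd 1 e * (1 / e) * bd \<sigma> (x / e)) = ennreal (gd 1 e * (1 / e)) * ennreal (bd \<sigma> (x / e))"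
          using g0 by (rule ennreal_mult')
        also have "ennreal (gd 1 e * (1 / e)) = ennreal (gd 1 e) * ennreal (1 / e)"
          using gd_nn[of 1 e] by (intro ennreal_mult') simp
        finally have "ennreal (gd 1 e * (1 / e) * bd \<sigma> (x / e)) = ennreal (gd 1 e) * (ennreal (1 / e) * ennreal (bd \<sigma> (x / e)))"
          by (simp add: mult.assoc)
        then show "ennreal (gd 1 e) * (ennreal (1 / e) * (ennreal (bd \<sigma> (x / e)) * \<Psi> x))
            = ennreal (gd 1 e * (1 / e) * bd \<sigma> (x / e)) * \<Psi> x" by (simp add: mult.assoc)
      qed
      finally show ?thesis unfolding A .
    qed (simp add: gd1)
  qed
  also have "\<dots> = (\<integral>\<^sup>+x. \<integral>\<^sup>+e. ennreal (gd 1 e * (1 / e) * bd \<sigma> (x / e)) * \<Psi> x \<partial>lborel \<partial>lborel)"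
    by (rule lborel_pair.Fubini') measurable
  also have "\<dots> = (\<integral>\<^sup>+g. ennreal (gd \<sigma> g) * \<Psi> g \<partial>lborel)"
  proof (rule nn_integral_cong)
    fix x :: real
    have "(\<integral>\<^sup>+e. ennreal (gd 1 e * (1 / e) * bd \<sigma> (x / e)) * \<Psi> x \<partial>lborel)
        = (\<integral>\<^sup>+e. ennreal (gd 1 e * (1 / e) * bd \<sigma> (x / e)) \<partial>lborel) * \<Psi> x"
      by (rule nn_integral_multc) measurable
    also have "(\<integral>\<^sup>+e. ennreal (gd 1 e * (1 / e) * bd \<sigma> (x / e)) \<partial>lborel) = ennreal (gd \<sigma> x)"
    proof (cases "x > 0")
      case True
      then show ?thesis using s s1 by (intro BG_inner) auto
    next
      case False
      have "(\<integral>\<^sup>+e. ennreal (gd 1 e * (1 / e) * bd \<sigma> (x / e)) \<partial>lborel) = (\<integral>\<^sup>+e. 0 \<partial>(lborel::real measure))"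
      proof (rule nn_integral_cong)
        fix e :: real
        show "ennreal (gd 1 e * (1 / e) * bd \<sigma> (x / e)) = 0"
        proof (cases "e > 0")
          case True
          then have "x / e \<le> 0" using False by (simp add: divide_nonpos_pos)
          then show ?thesis by (simp add: bd_def)
        qed (simp add: gd1)
      qed
      then show ?thesis using False by (simp add: gd_def)
    qed
    finally show "(\<integral>\<^sup>+e. ennreal (gd 1 e * (1 / e) * bd \<sigma> (x / e)) * \<Psi> x \<partial>lborel) = ennreal (gd \<sigma> x) * \<Psi> x" .
  qed
  finally show ?thesis .
qed




lemma meas_laws[simp]:
  "measurable (ratio_law M N) K = measurable borel K"
  "measurable (prod_law M N) K = measurable borel K"
  "measurable (gamma_law a) K = measurable borel K"
  "measurable (beta_law a b) K = measurable borel K"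
  by (rule measurable_cong_sets; simp)+

lemma AE_pos_op:
  fixes M N :: "real measure" and op :: "real \<Rightarrow> real \<Rightarrow> real"
  assumes M: "sigma_finite_measure M" and N: "sigma_finite_measure N"
    and sM: "sets M = sets borel" and sN: "sets N = sets borel"
    and aM: "AE x in M. 0 < x" and aN: "AE y in N. 0 < y"
    and op: "\<And>x y. 0 < x \<Longrightarrow> 0 < y \<Longrightarrow> 0 < op x y"
    and opm[measurable]: "(\<lambda>z. op (fst z) (snd z)) \<in> borel_measurable (borel \<Otimes>\<^sub>M borel)"
  shows "AE z in distr (M \<Otimes>\<^sub>M N) borel (\<lambda>z. op (fst z) (snd z)). 0 < z"
proof -
  interpret pair_sigma_finite M N using M N by (simp add: pair_sigma_finite_def)
  have m: "(\<lambda>z. op (fst z) (snd z)) \<in> measurable (M \<Otimes>\<^sub>M N) borel"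
    unfolding meas_pair_borel[OF sM sN] by (rule opm)
  have ps: "{x \<in> space (M \<Otimes>\<^sub>M N). 0 < op (fst x) (snd x)} \<in> sets (M \<Otimes>\<^sub>M N)"
  proof -
    have "{x \<in> space (M \<Otimes>\<^sub>M N). 0 < op (fst x) (snd x)} = (\<lambda>z. op (fst z) (snd z)) -` {0<..} \<inter> space (M \<Otimes>\<^sub>M N)"
      by auto
    also have "\<dots> \<in> sets (M \<Otimes>\<^sub>M N)" using measurable_sets[OF m borel_open[OF open_greaterThan[of 0]]] .
    finally show ?thesis .
  qed
  have "AE x in M \<Otimes>\<^sub>M N. 0 < op (fst x) (snd x)"
  proof (rule AE_pair_measure[OF ps])
    show "AE x in M. AE y in N. 0 < op (fst (x, y)) (snd (x, y))"
      using aM by (rule eventually_mono) (use aN in \<open>auto elim!: eventually_mono intro: op\<close>)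
  qed
  moreover have pb: "{x::real. 0 < x} \<in> sets borel"
    using borel_open[OF open_greaterThan[of "0::real"]] by (simp add: greaterThan_def)
  ultimately show ?thesis by (subst AE_distr_iff[OF m]) (auto simp: pb)
qed

lemma AE_pos_density:
  fixes d :: "real \<Rightarrow> real"
  assumes [measurable]: "d \<in> borel_measurable borel" and d: "\<And>x. x \<le> 0 \<Longrightarrow> d x = 0"
  shows "AE x in density lborel (\<lambda>x. ennreal (d x)). 0 < x"
proof (subst AE_density)
  show "AE x in lborel. 0 < ennreal (d x) \<longrightarrow> 0 < x"
  proof (rule AE_I2)
    fix x :: real show "0 < ennreal (d x) \<longrightarrow> 0 < x" using d[of x] by (cases "x \<le> 0") auto
  qed
qed simp

lemma AE_gamma: "AE x in gamma_law a. 0 < x"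
  unfolding gamma_law_gd by (rule AE_pos_density) (auto simp: gd_def)

lemma AE_beta: assumes "0 < \<sigma>" "\<sigma> \<le> 1" shows "AE x in beta_law \<sigma> (1 - \<sigma>). 0 < x"
proof (cases "\<sigma> = 1")
  case True
  then have e: "beta_law \<sigma> (1 - \<sigma>) = return borel 1" by (simp add: beta_law_1)
  show ?thesis unfolding e by (subst AE_return) auto
next
  case False
  then have s1: "\<sigma> < 1" using assms by simp
  show ?thesis unfolding beta_law_bd[OF s1] by (rule AE_pos_density) (auto simp: bd_def)
qed

context stab begin

lemma AE_X: assumes th: "\<theta> > 0" shows "AE q in X_law f \<theta>. 0 < q"
  unfolding X_law_def ratio_law_def
proof (rule AE_pos_op)
  show "AE x in stable_law f. 0 < x" unfolding stable_law_def by (rule AE_pos_density) (auto simp: f_neg)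
  show "AE x in tilted_stable_law f \<theta>. 0 < x" unfolding tilted_td by (rule AE_pos_density) (auto simp: td_def)
qed (auto intro!: prob_space_imp_sigma_finite prob_stable prob_tilted th)

lemma AE_Xs: assumes s: "0 < \<sigma>" "\<sigma> \<le> 1" shows "AE q in X_sigma_law f \<sigma>. 0 < q"
  unfolding X_sigma_law_def prod_law_def
proof (rule AE_pos_op)
  show "AE x in beta_law \<sigma> (1 - \<sigma>). 0 < x" using s by (rule AE_beta)
  show "AE x in X_law f \<sigma>. 0 < x" using s by (intro AE_X) simp
qed (use s in \<open>auto intro!: prob_space_imp_sigma_finite prob_X prob_beta\<close>)

lemma AE_mu: assumes s: "0 < \<sigma>" "\<sigma> \<le> 1" shows "AE x in ratio_law (gamma_law 1) (X_sigma_law f \<sigma>). 0 < x"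
  unfolding ratio_law_def
proof (rule AE_pos_op)
  show "AE x in gamma_law 1. 0 < x" by (rule AE_gamma)
  show "AE x in X_sigma_law f \<sigma>. 0 < x" using s by (rule AE_Xs)
qed (use s in \<open>auto intro!: prob_space_imp_sigma_finite prob_Xs prob_gamma\<close>)

end


context stab begin

lemma P_val:
  assumes s: "0 < \<sigma>" "\<sigma> \<le> 1" and l: "l \<ge> 0"
  shows "(\<integral>\<^sup>+x. ennreal (1 - exp (-(l * x))) \<partial>ratio_law (gamma_law 1) (X_sigma_law f \<sigma>)) = ennreal (Fz \<sigma> l)"
proof -
  let ?mu = "ratio_law (gamma_law 1) (X_sigma_law f \<sigma>)"
  have sfXs: "sigma_finite_measure (X_sigma_law f \<sigma>)" using s by (intro prob_space_imp_sigma_finite prob_Xs)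
  have sfX: "sigma_finite_measure (X_law f \<sigma>)" using s by (intro sf_X) simp
  have sfG: "sigma_finite_measure (gamma_law 1)" by (intro prob_space_imp_sigma_finite prob_gamma) simp
  have sfmu: "sigma_finite_measure ?mu" using s
    by (intro prob_space_imp_sigma_finite prob_ratio prob_gamma prob_Xs) auto
  define \<Psi> where "\<Psi> g = (\<integral>\<^sup>+q. \<integral>\<^sup>+e. ennreal (gd 1 e) * indicator {..l} (g / e * q) \<partial>lborel \<partial>X_law f \<sigma>)" for g
  have Pm[measurable]: "\<Psi> \<in> borel_measurable borel"
    unfolding \<Psi>_def by (rule meas_param[OF sfX]) measurable
  have "(\<integral>\<^sup>+x. ennreal (1 - exp (-(l * x))) \<partial>?mu)
      = (\<integral>\<^sup>+x. \<integral>\<^sup>+e'. ennreal (gd 1 e') * indicator {..0} (e' - l * x) \<partial>lborel \<partial>?mu)"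
  proof (rule nn_integral_cong_AE)
    show "AE x in ?mu. ennreal (1 - exp (-(l * x))) = (\<integral>\<^sup>+e'. ennreal (gd 1 e') * indicator {..0} (e' - l * x) \<partial>lborel)"
      using AE_mu[OF s]
    proof (rule eventually_mono)
      fix x :: real assume x: "0 < x"
      have "(\<integral>\<^sup>+e'. ennreal (gd 1 e') * indicator {..0} (e' - l * x) \<partial>lborel)
          = (\<integral>\<^sup>+e'. ennreal (if 0 < e' then exp (-e') else 0) * indicator {..l * x} e' \<partial>lborel)"
        by (intro nn_integral_cong) (simp add: gd1 indicator_def)
      also have "\<dots> = ennreal (1 - exp (-(l * x)))" using x l by (intro exp_head) simp
      finally show "ennreal (1 - exp (-(l * x))) = (\<integral>\<^sup>+e'. ennreal (gd 1 e') * indicator {..0} (e' - l * x) \<partial>lborel)" ..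
    qed
  qed
  also have "\<dots> = (\<integral>\<^sup>+e'. \<integral>\<^sup>+x. ennreal (gd 1 e') * indicator {..0} (e' - l * x) \<partial>?mu \<partial>lborel)"
    by (rule swap_lb[OF sfmu, symmetric]) auto
  also have "\<dots> = (\<integral>\<^sup>+e'. ennreal (gd 1 e') * (\<integral>\<^sup>+b. \<Psi> (e' * b) \<partial>beta_law \<sigma> (1 - \<sigma>)) \<partial>lborel)"
  proof (rule nn_integral_cong)
    fix e' :: real
    show "(\<integral>\<^sup>+x. ennreal (gd 1 e') * indicator {..0} (e' - l * x) \<partial>?mu)
      = ennreal (gd 1 e') * (\<integral>\<^sup>+b. \<Psi> (e' * b) \<partial>beta_law \<sigma> (1 - \<sigma>))"
    proof (cases "e' > 0")
      case ep: True
      have "(\<integral>\<^sup>+x. ennreal (gd 1 e') * indicator {..0} (e' - l * x) \<partial>?mu)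
          = ennreal (gd 1 e') * (\<integral>\<^sup>+x. indicator {..0} (e' - l * x) \<partial>?mu)"
        by (rule nn_integral_cmult) auto
      also have "(\<integral>\<^sup>+x. indicator {..0} (e' - l * x) \<partial>?mu)
          = (\<integral>\<^sup>+z. \<integral>\<^sup>+e. indicator {..0} (e' - l * (e / z)) \<partial>gamma_law 1 \<partial>X_sigma_law f \<sigma>)"
        by (rule nn_ratio2[OF sfG sfXs]) auto
      also have "\<dots> = (\<integral>\<^sup>+b. \<integral>\<^sup>+q. (\<integral>\<^sup>+e. indicator {..0} (e' - l * (e / (b * q))) \<partial>gamma_law 1) \<partial>X_law f \<sigma> \<partial>beta_law \<sigma> (1 - \<sigma>))"
        unfolding X_sigma_law_def
        by (rule nn_prod1[OF sfX]) (auto intro!: meas_param[OF sfG])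
      also have "\<dots> = (\<integral>\<^sup>+b. \<Psi> (e' * b) \<partial>beta_law \<sigma> (1 - \<sigma>))"
      proof (rule nn_integral_cong_AE)
        show "AE b in beta_law \<sigma> (1 - \<sigma>). (\<integral>\<^sup>+q. (\<integral>\<^sup>+e. indicator {..0} (e' - l * (e / (b * q))) \<partial>gamma_law 1) \<partial>X_law f \<sigma>) = \<Psi> (e' * b)"
          using AE_beta[OF s]
        proof (rule eventually_mono)
          fix b :: real assume b: "0 < b"
          show "(\<integral>\<^sup>+q. (\<integral>\<^sup>+e. indicator {..0} (e' - l * (e / (b * q))) \<partial>gamma_law 1) \<partial>X_law f \<sigma>) = \<Psi> (e' * b)"
            unfolding \<Psi>_def
          proof (rule nn_integral_cong_AE)
            show "AE q in X_law f \<sigma>. (\<integral>\<^sup>+e. indicator {..0} (e' - l * (e / (b * q))) \<partial>gamma_law 1)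
               = (\<integral>\<^sup>+e. ennreal (gd 1 e) * indicator {..l} (e' * b / e * q) \<partial>lborel)"
              using AE_X[OF s(1)]
            proof (rule eventually_mono)
              fix q :: real assume q: "0 < q"
              show "(\<integral>\<^sup>+e. indicator {..0} (e' - l * (e / (b * q))) \<partial>gamma_law 1)
                 = (\<integral>\<^sup>+e. ennreal (gd 1 e) * indicator {..l} (e' * b / e * q) \<partial>lborel)"
                unfolding gamma_law_gd
              proof (subst nn_integral_density, simp, simp, rule nn_integral_cong)
                fix e :: real
                show "ennreal (gd 1 e) * indicator {..0} (e' - l * (e / (b * q))) = ennreal (gd 1 e) * indicator {..l} (e' * b / e * q)"
                proof (cases "e > 0")
                  case True
                  have "e' - l * (e / (b * q)) \<le> 0 \<longleftrightarrow> e' * b / e * q \<le> l"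
                    using True b q by (simp add: field_simps)
                  then show ?thesis by (simp add: indicator_def)
                qed (simp add: gd1)
              qed
            qed
          qed
        qed
      qed
      finally show ?thesis .
    qed (simp add: gd1)
  qed
  also have "\<dots> = (\<integral>\<^sup>+g. ennreal (gd \<sigma> g) * \<Psi> g \<partial>lborel)"
    using s by (rule BG) simp
  also have "\<dots> = ES \<sigma> l" unfolding ES_def \<Psi>_def ..
  also have "\<dots> = ennreal (Fz \<sigma> l)" using s by (intro ES_val) simp
  finally show ?thesis .
qed

end


context stab begin

lemma part2:
  assumes s: "0 < \<sigma>" "\<sigma> \<le> 1" and l: "l \<ge> 0"
  shows "(\<integral>x. exp (-(l * x)) \<partial>(ratio_law (gamma_law 1) (X_sigma_law f \<sigma>))) = 1 - l powr \<sigma> * (1 + l powr \<alpha>) powr (-\<sigma> / \<alpha>)"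
proof -
  let ?mu = "ratio_law (gamma_law 1) (X_sigma_law f \<sigma>)"
  have pmu: "prob_space ?mu" using s by (intro prob_ratio prob_gamma prob_Xs) auto
  define a where "a = (\<integral>\<^sup>+x. ennreal (exp (-(l * x))) \<partial>?mu)"
  define c where "c = Fz \<sigma> l"
  have c0: "0 \<le> c" by (simp add: c_def Fz_def)
  have I: "(\<integral>x. exp (-(l * x)) \<partial>?mu) = enn2real a"
    unfolding a_def by (rule integral_eq_nn_integral) auto
  have "a + ennreal c = (\<integral>\<^sup>+x. ennreal (exp (-(l * x))) + ennreal (1 - exp (-(l * x))) \<partial>?mu)"
    unfolding a_def c_def P_val[OF s l, symmetric] by (rule nn_integral_add[symmetric]) auto
  also have "\<dots> = (\<integral>\<^sup>+x. 1 \<partial>?mu)"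
  proof (rule nn_integral_cong_AE)
    show "AE x in ?mu. ennreal (exp (-(l * x))) + ennreal (1 - exp (-(l * x))) = 1"
      using AE_mu[OF s]
    proof (rule eventually_mono)
      fix x :: real assume x: "0 < x"
      then have "exp (-(l * x)) \<le> 1" using l by simp
      then show "ennreal (exp (-(l * x))) + ennreal (1 - exp (-(l * x))) = 1"
        by (simp add: ennreal_plus[symmetric] del: ennreal_plus)
    qed
  qed
  also have "\<dots> = 1" using prob_space.emeasure_space_1[OF pmu] by simp
  finally have ac: "a + ennreal c = 1" .
  then have c1: "c \<le> 1"
    by (metis add.commute ennreal_le_1 le_iff_add)
  have "a = 1 - ennreal c" using ac by (metis ennreal_add_diff_cancel_right ennreal_neq_top)
  also have "\<dots> = ennreal (1 - c)" using c0 by (simp add: ennreal_minus[symmetric])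
  finally have "enn2real a = 1 - c" using c1 by simp
  then show ?thesis unfolding I c_def Fz_def using l by auto
qed

end




theorem proposition2p9:
  fixes \<alpha> :: real and f :: "real \<Rightarrow> real"
  assumes "0 < \<alpha>" and "\<alpha> < 1" and "pos_stable_density \<alpha> f"
  shows "(\<forall>\<theta>>0.
            W_law \<alpha> \<theta> = density lborel (\<lambda>y. ennreal (if 0 < y then
                \<theta> * y powr (\<theta> - 1) * (1 + y powr \<alpha>) powr (-(\<theta> + \<alpha>) / \<alpha>) else 0))
          \<and> (\<forall>y>0. measure (W_law \<alpha> \<theta>) {..y} = y powr \<theta> * (1 + y powr \<alpha>) powr (-\<theta> / \<alpha>))
          \<and> W_law \<alpha> \<theta> = pow_law (ratio_law (gamma_law (\<theta> / \<alpha>)) (gamma_law 1)) (1 / \<alpha>)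
          \<and> W_law \<alpha> \<theta> = ratio_law (chi_law \<alpha> f \<theta>) (gamma_law 1)
          \<and> W_law \<alpha> \<theta> = prod_law (ratio_law (gamma_law \<theta>) (gamma_law 1)) (X_law f \<theta>))
       \<and> (\<forall>\<sigma>. 0 < \<sigma> \<and> \<sigma> \<le> 1 \<longrightarrow> (\<forall>l\<ge>0.
            (\<integral>x. exp (-(l * x)) \<partial>(ratio_law (gamma_law 1) (X_sigma_law f \<sigma>)))
              = 1 - l powr \<sigma> * (1 + l powr \<alpha>) powr (-\<sigma> / \<alpha>)))"
proof -
  interpret stab \<alpha> f using assms by unfold_locales
  have P1: "W_law \<alpha> \<theta> = density lborel (\<lambda>y. ennreal (if 0 < y then
                \<theta> * y powr (\<theta> - 1) * (1 + y powr \<alpha>) powr (-(\<theta> + \<alpha>) / \<alpha>) else 0))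
          \<and> (\<forall>y>0. measure (W_law \<alpha> \<theta>) {..y} = y powr \<theta> * (1 + y powr \<alpha>) powr (-\<theta> / \<alpha>))
          \<and> W_law \<alpha> \<theta> = pow_law (ratio_law (gamma_law (\<theta> / \<alpha>)) (gamma_law 1)) (1 / \<alpha>)
          \<and> W_law \<alpha> \<theta> = ratio_law (chi_law \<alpha> f \<theta>) (gamma_law 1)
          \<and> W_law \<alpha> \<theta> = prod_law (ratio_law (gamma_law \<theta>) (gamma_law 1)) (X_law f \<theta>)" if th: "\<theta> > 0" for \<theta>
  proof -
    have sW: "sets (W_law \<alpha> \<theta>) = sets borel" by (simp add: W_law_def)
    have cW: "emeasure (W_law \<alpha> \<theta>) {..y} = ennreal (Fz \<theta> y)" for y using th by (rule W_cdf)
    have fW: "emeasure (W_law \<alpha> \<theta>) {..y} \<noteq> \<infinity>" for y by (simp add: cW)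
    have e1: "W_law \<alpha> \<theta> = density lborel (\<lambda>y. ennreal (wd \<theta> y))"
      by (rule measure_eq_atMost[OF sW _ _ fW]) (simp_all add: cW Dens_cdf th)
    have e2: "\<forall>y>0. measure (W_law \<alpha> \<theta>) {..y} = y powr \<theta> * (1 + y powr \<alpha>) powr (-\<theta> / \<alpha>)"
      by (auto simp: measure_def cW Fz_def)
    have e3: "W_law \<alpha> \<theta> = pow_law (ratio_law (gamma_law (\<theta> / \<alpha>)) (gamma_law 1)) (1 / \<alpha>)"
      by (rule measure_eq_atMost[OF sW _ _ fW]) (simp_all add: cW C_cdf th)
    have e4: "W_law \<alpha> \<theta> = ratio_law (chi_law \<alpha> f \<theta>) (gamma_law 1)"
      by (rule measure_eq_atMost[OF sW _ _ fW]) (simp_all add: cW D_cdf th)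
    have e5: "W_law \<alpha> \<theta> = prod_law (ratio_law (gamma_law \<theta>) (gamma_law 1)) (X_law f \<theta>)"
      by (rule measure_eq_atMost[OF sW _ _ fW]) (simp_all add: cW E_cdf ES_val th)
    show ?thesis using e1 e2 e3 e4 e5 by (simp add: wd_def)
  qed
  show ?thesis using P1 part2 by blast
qed


end
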